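(* The function $\Psi(\lambda_i):=\max\{\operatorname{argmin}_{\lambda_{i-1}}(F_{i-1}(\lambda_{i-1})+f_i(\lambda_{i-1},\lambda_i))\}$ is monotone (non-decreasing) in $\lambda_i$.
   Context: Semi-discrete setting: $P$ and $Q$ are polygonal curves in $\mathbb{R}^d$, $\rho,s\in\mathbb{R}$, $Q(y)$ is the point of $Q$ at arc length $y\in[0,|Q|]$, and $\theta_\rho(p,q)=1$ if the Euclidean distance of $p,q$ exceeds $\rho$ and $0$ otherwise. Let $x_i$ be the arc length of $P$ up to its $i$-th vertex; the hiker stands at a fixed vertex of $P$ during each interval $[x_{i-1},x_i]$, and $h(t)$ denotes its position at time $t$. For $a,b\in[0,|Q|]$, $f_i(a,b)$ is the minimum of $\int_{x_{i-1}}^{x_i}\theta_\rho(h(t),Q(\gamma(t)))\,dt$ over differentiable $\gamma:[x_{i-1},x_i]\to[0,|Q|]$ with $|\gamma'|\le s$, $\gamma(x_{i-1})=a$, $\gamma(x_i)=b$ ($\infty$ if none exists). $F_i(\lambda)$ is the minimum cost $\int_0^{x_i}\theta_\rho(h(t),Q(\gamma(t)))\,dt$ over all speed-bounded dog traversals $\gamma$ starting at $\gamma(0)=0$ and ending at $\gamma(x_i)=\lambda$; equivalently $F_i(\lambda_i)=\min_{\lambda_{i-1}}(F_{i-1}(\lambda_{i-1})+f_i(\lambda_{i-1},\lambda_i))$. *)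

theory Defs
  imports "HOL-Analysis.Analysis"
begin

text \<open>Polygonal curves are given by their (nonempty) list of vertices.\<close>

definition theta :: "real \<Rightarrow> 'a::metric_space \<Rightarrow> 'a \<Rightarrow> real" where
  "theta \<rho> p q = (if dist p q > \<rho> then 1 else 0)"

fun curve_len :: "'a::metric_space list \<Rightarrow> real" where
  "curve_len [] = 0"
| "curve_len [_] = 0"
| "curve_len (p # q # r) = dist p q + curve_len (q # r)"

text \<open>Point of a polygonal curve at arc length y (meaningful for y in [0, curve_len]).\<close>
fun curve_pt :: "'a::real_normed_vector list \<Rightarrow> real \<Rightarrow> 'a" where
  "curve_pt [] y = 0"
| "curve_pt [q] y = q"
| "curve_pt (q # q' # qs) y =
     (if y \<le> dist q q' then q + (y / dist q q') *\<^sub>R (q' - q)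
      else curve_pt (q' # qs) (y - dist q q'))"

text \<open>Arc length of P up to its i-th vertex (vertices indexed from 0; x_0 = 0).\<close>
definition vx :: "'a::metric_space list \<Rightarrow> nat \<Rightarrow> real" where
  "vx P i = curve_len (take (Suc i) P)"

text \<open>The hiker stands at a fixed vertex of P during each interval (x_{j-1}, x_j); endpoint values are irrelevant (measure zero).\<close>
definition hiker_on_vertices :: "'a::metric_space list \<Rightarrow> (real \<Rightarrow> 'a) \<Rightarrow> bool" where
  "hiker_on_vertices P h \<longleftrightarrow>
     (\<forall>j. 1 \<le> j \<and> j < length P \<longrightarrow>
        (\<exists>v\<in>set P. \<forall>t\<in>{vx P (j - 1)<..<vx P j}. h t = v))"

definition speed_bounded :: "real \<Rightarrow> real \<Rightarrow> real \<Rightarrow> (real \<Rightarrow> real) \<Rightarrow> bool" where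
  "speed_bounded s a b \<gamma> \<longleftrightarrow>
     (\<exists>\<gamma>'. \<forall>t\<in>{a..b}. (\<gamma> has_real_derivative \<gamma>' t) (at t within {a..b}) \<and> \<bar>\<gamma>' t\<bar> \<le> s)"

definition dog_paths ::
  "'a::real_normed_vector list \<Rightarrow> real \<Rightarrow> real \<Rightarrow> real \<Rightarrow> real \<Rightarrow> real \<Rightarrow> (real \<Rightarrow> real) set" where
  "dog_paths Q s a b \<alpha> \<beta> =
     {\<gamma>. speed_bounded s a b \<gamma> \<and> \<gamma> ` {a..b} \<subseteq> {0..curve_len Q} \<and> \<gamma> a = \<alpha> \<and> \<gamma> b = \<beta>}"

definition cost ::
  "real \<Rightarrow> (real \<Rightarrow> 'a::real_normed_vector) \<Rightarrow> 'a list \<Rightarrow> real \<Rightarrow> real \<Rightarrow> (real \<Rightarrow> real) \<Rightarrow> real" where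
  "cost \<rho> h Q a b \<gamma> = integral {a..b} (\<lambda>t. theta \<rho> (h t) (curve_pt Q (\<gamma> t)))"

text \<open>f_i(a,b): minimum cost over [x_{i-1}, x_i]; infinity if no admissible path.\<close>
definition f_cost ::
  "real \<Rightarrow> real \<Rightarrow> (real \<Rightarrow> 'a::real_normed_vector) \<Rightarrow> 'a list \<Rightarrow> 'a list \<Rightarrow> nat \<Rightarrow> real \<Rightarrow> real \<Rightarrow> ereal" where
  "f_cost \<rho> s h P Q i a b =
     (INF \<gamma>\<in>dog_paths Q s (vx P (i - 1)) (vx P i) a b. ereal (cost \<rho> h Q (vx P (i - 1)) (vx P i) \<gamma>))"

definition F_cost ::
  "real \<Rightarrow> real \<Rightarrow> (real \<Rightarrow> 'a::real_normed_vector) \<Rightarrow> 'a list \<Rightarrow> 'a list \<Rightarrow> nat \<Rightarrow> real \<Rightarrow> ereal" where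
  "F_cost \<rho> s h P Q i lam =
     (INF \<gamma>\<in>dog_paths Q s 0 (vx P i) 0 lam. ereal (cost \<rho> h Q 0 (vx P i) \<gamma>))"

definition Psi ::
  "real \<Rightarrow> real \<Rightarrow> (real \<Rightarrow> 'a::real_normed_vector) \<Rightarrow> 'a list \<Rightarrow> 'a list \<Rightarrow> nat \<Rightarrow> real \<Rightarrow> real" where
  "Psi \<rho> s h P Q i lam =
     (GREATEST \<mu>. \<mu> \<in> {0..curve_len Q} \<and>
        (\<forall>\<nu>\<in>{0..curve_len Q}.
           F_cost \<rho> s h P Q (i - 1) \<mu> + f_cost \<rho> s h P Q i \<mu> lam
           \<le> F_cost \<rho> s h P Q (i - 1) \<nu> + f_cost \<rho> s h P Q i \<nu> lam))"

end

theory Submission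
  imports Defs
begin

lemma image_measure_bound:
  fixes f f' :: "real \<Rightarrow> real"
  assumes S: "S \<in> lmeasurable"
    and der: "\<And>x. x \<in> S \<Longrightarrow> (f has_real_derivative f' x) (at x within S)"
    and bnd: "\<And>x. x \<in> S \<Longrightarrow> \<bar>f' x\<bar> \<le> B"
  shows "f ` S \<in> lmeasurable \<and> measure lebesgue (f ` S) \<le> B * measure lebesgue S"
proof -
  let ?lift = "vec :: real \<Rightarrow> real^1"
  let ?drop = "(\<lambda>x::real^1. x $ 1)"
  have dropvec: "?drop ` (?lift ` X) = X" for X by (auto simp: image_iff)
  have meas_transfer: "?lift ` X \<in> lmeasurable \<and> measure lebesgue (?lift ` X) = measure lebesgue X"
    if "X \<in> lmeasurable" for X
  proof -
    have "((\<lambda>x. 1::real) has_integral measure lebesgue X) X"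
      using that lmeasure_integral[OF that] lmeasurable_iff_integrable_on
      by (metis has_integral_integral)
    then have "(((\<lambda>x. 1::real) \<circ> ?lift) has_integral measure lebesgue X) (?drop ` (?lift ` X))"
      by (simp add: dropvec o_def)
    then have "((\<lambda>x. 1::real) has_integral measure lebesgue X) (?lift ` X)"
      by (rule has_integral_vec1_D)
    then show ?thesis
      by (metis has_integral_integrable integral_unique lmeasurable_iff_integrable_on lmeasure_integral)
  qed
  have meas_back: "X \<in> lmeasurable \<and> measure lebesgue X = measure lebesgue (?lift ` X)"
    if "?lift ` X \<in> lmeasurable" for X
  proof -
    have "((\<lambda>x. 1::real) has_integral measure lebesgue (?lift ` X)) (?lift ` X)"
      using that lmeasure_integral[OF that] lmeasurable_iff_integrable_on
      by (metis has_integral_integral)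
    then have "(((\<lambda>x. 1::real) \<circ> ?lift) has_integral measure lebesgue (?lift ` X)) (?drop ` (?lift ` X))"
      by (rule has_integral_vec1_I)
    then have "((\<lambda>x. 1::real) has_integral measure lebesgue (?lift ` X)) X"
      by (simp add: dropvec o_def)
    then show ?thesis
      by (metis has_integral_integrable integral_unique lmeasurable_iff_integrable_on lmeasure_integral)
  qed
  have S1: "?lift ` S \<in> lmeasurable" and mS1: "measure lebesgue (?lift ` S) = measure lebesgue S"
    using meas_transfer[OF S] by auto
  have der': "((\<lambda>x. ?lift (f (?drop x))) has_derivative (*\<^sub>R) (f' (?drop x))) (at x within ?lift ` S)"
    if xin: "x \<in> ?lift ` S" for x
  proof -
    obtain z where z: "z \<in> S" "x = ?lift z" using xin by blast
    have "((\<lambda>x. vec (f (x $ 1))) has_derivative (*\<^sub>R) (f' z)) (at (vec z) within ?lift ` S)"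
      using der [OF z(1)]
      by (simp add: has_real_derivative_iff_has_vector_derivative has_vector_derivative_def has_derivative_vector_1)
    then show ?thesis using z by simp
  qed
  have bnd': "\<bar>det (matrix ((*\<^sub>R) (f' (?drop x)) :: real^1 \<Rightarrow> real^1))\<bar> \<le> B" if "x \<in> ?lift ` S" for x
    using that bnd by auto
  have int: "(\<lambda>x. \<bar>det (matrix ((*\<^sub>R) (f' (?drop x)) :: real^1 \<Rightarrow> real^1))\<bar>) integrable_on ?lift ` S"
  proof (rule measurable_bounded_by_integrable_imp_integrable_real)
    show "(\<lambda>x. \<bar>det (matrix ((*\<^sub>R) (f' (?drop x)) :: real^1 \<Rightarrow> real^1))\<bar>) \<in> borel_measurable (lebesgue_on (?lift ` S))"
      using borel_measurable_det_Jacobian[OF fmeasurableD[OF S1] der'] by (intro measurable) auto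
    show "(\<lambda>x. B) integrable_on ?lift ` S" using S1 by (rule integrable_on_const)
    show "?lift ` S \<in> sets lebesgue" using S1 by (rule fmeasurableD)
  qed (use bnd' in auto)
  have "(\<lambda>x. ?lift (f (?drop x))) ` (?lift ` S) \<in> lmeasurable"
       "measure lebesgue ((\<lambda>x. ?lift (f (?drop x))) ` (?lift ` S)) \<le> B * measure lebesgue (?lift ` S)"
    using measurable_bounded_differentiable_image[OF S1 der' int bnd']
      measure_bounded_differentiable_image[OF S1 der' int bnd'] by auto
  moreover have "(\<lambda>x. ?lift (f (?drop x))) ` (?lift ` S) = ?lift ` (f ` S)"
    by (auto simp: image_iff)
  ultimately show ?thesis using meas_back[of "f ` S"] mS1 by auto
qed

lemma curve_pt_0: "curve_pt (q # qs) 0 = q"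
  by (cases qs) auto

lemma continuous_curve_pt: "continuous_on UNIV (curve_pt Q)"
proof (induction Q rule: curve_len.induct)
  case 1
  then show ?case by simp
next
  case (2 x)
  then show ?case by simp
next
  case (3 q q' r)
  let ?d = "dist q q'"
  have eq: "curve_pt (q # q' # r) = (\<lambda>y. if y \<le> ?d then q + (y / ?d) *\<^sub>R (q' - q) else curve_pt (q' # r) (y - ?d))"
    by auto
  show ?case unfolding eq
  proof (rule continuous_on_cases_le[where h="\<lambda>y. y"])
    show "continuous_on {y \<in> UNIV. y \<le> ?d} (\<lambda>y. q + (y / ?d) *\<^sub>R (q' - q))"
      by (cases "?d = 0") (auto intro!: continuous_intros)
    show "continuous_on {y \<in> UNIV. ?d \<le> y} (\<lambda>y. curve_pt (q' # r) (y - ?d))"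
      by (rule continuous_on_compose2[OF 3]) (auto intro: continuous_intros)
    show "continuous_on UNIV (\<lambda>y::real. y)" by (intro continuous_intros)
    fix y :: real assume "y = ?d"
    then show "q + (y / ?d) *\<^sub>R (q' - q) = curve_pt (q' # r) (y - ?d)"
      by (cases "?d = 0") (auto simp: curve_pt_0)
  qed
qed

lemma theta_01: "0 \<le> theta \<rho> p q" "theta \<rho> p q \<le> 1"
  by (auto simp: theta_def)

definition Bad :: "real \<Rightarrow> 'a::real_normed_vector \<Rightarrow> 'a list \<Rightarrow> real set" where
  "Bad \<rho> w Q = {y. \<rho> < dist w (curve_pt Q y)}"

lemma open_Bad: "open (Bad \<rho> w Q)"
proof -
  have "continuous_on UNIV (\<lambda>y. dist w (curve_pt Q y))"
    by (rule continuous_on_compose2[OF continuous_on_dist[OF continuous_on_const continuous_on_id] continuous_curve_pt]) auto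
  then have "open ((\<lambda>y. dist w (curve_pt Q y)) -` {\<rho><..})"
    by (simp add: continuous_on_open_vimage)
  then show ?thesis unfolding Bad_def by (simp add: vimage_def)
qed

lemma piece:
  fixes \<gamma> :: "real \<Rightarrow> real" and h :: "real \<Rightarrow> 'a::real_normed_vector"
  assumes uv: "u \<le> v" and hw: "\<And>t. t \<in> {u<..<v} \<Longrightarrow> h t = w" and cont: "continuous_on {u..v} \<gamma>"
  shows "{t\<in>{u..v}. \<gamma> t \<in> Bad \<rho> w Q} \<in> lmeasurable"
    and "(\<lambda>t. theta \<rho> (h t) (curve_pt Q (\<gamma> t))) integrable_on {u..v}"
    and "integral {u..v} (\<lambda>t. theta \<rho> (h t) (curve_pt Q (\<gamma> t))) = measure lebesgue {t\<in>{u..v}. \<gamma> t \<in> Bad \<rho> w Q}"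
proof -
  let ?S = "{t\<in>{u..v}. \<gamma> t \<in> Bad \<rho> w Q}"
  have "openin (top_of_set {u..v}) ({u..v} \<inter> \<gamma> -` Bad \<rho> w Q)"
    by (rule continuous_openin_preimage_gen[OF cont open_Bad])
  then have "{u..v} \<inter> \<gamma> -` Bad \<rho> w Q \<in> sets lebesgue"
    by (rule lebesgue_openin) simp
  moreover have Seq: "?S = {u..v} \<inter> \<gamma> -` Bad \<rho> w Q" by auto
  ultimately have "?S \<in> sets lebesgue" by simp
  moreover have "bounded ?S" by (rule bounded_subset[of "{u..v}"]) auto
  ultimately show Sm: "?S \<in> lmeasurable"
    by (intro bounded_set_imp_lmeasurable) auto
  have ind: "(\<lambda>t. if t \<in> ?S then 1 else 0::real) integrable_on {u..v}"
  proof -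
    have "?S \<inter> {u..v} = ?S" by auto
    then have "(\<lambda>t. 1::real) integrable_on (?S \<inter> {u..v})"
      using Sm lmeasurable_iff_integrable_on by metis
    then show ?thesis by (simp only: integrable_restrict_Int)
  qed
  have eqf: "theta \<rho> (h t) (curve_pt Q (\<gamma> t)) = (if t \<in> ?S then 1 else 0)" if "t \<in> {u..v} - {u,v}" for t
    using that hw[of t] by (auto simp: theta_def Bad_def)
  show "(\<lambda>t. theta \<rho> (h t) (curve_pt Q (\<gamma> t))) integrable_on {u..v}"
    by (rule integrable_spike[OF ind, of "{u,v}"]) (use eqf in auto)
  have "integral {u..v} (\<lambda>t. theta \<rho> (h t) (curve_pt Q (\<gamma> t))) = integral {u..v} (\<lambda>t. if t \<in> ?S then 1 else 0::real)"
    by (rule integral_spike[of "{u,v}"]) (use eqf in auto)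
  also have "\<dots> = integral (?S \<inter> {u..v}) (\<lambda>t. 1::real)"
    by (rule integral_restrict_Int)
  also have "?S \<inter> {u..v} = ?S" by auto
  also have "integral ?S (\<lambda>t. 1::real) = measure lebesgue ?S"
    using lmeasure_integral[OF Sm] by simp
  finally show "integral {u..v} (\<lambda>t. theta \<rho> (h t) (curve_pt Q (\<gamma> t))) = measure lebesgue ?S" .
qed

definition sbp :: "real \<Rightarrow> real \<Rightarrow> real \<Rightarrow> (real \<Rightarrow> real) \<Rightarrow> (real \<Rightarrow> real) \<Rightarrow> bool" where
  "sbp s u v \<gamma> \<gamma>' \<longleftrightarrow> (\<forall>t\<in>{u..v}. (\<gamma> has_real_derivative \<gamma>' t) (at t within {u..v}) \<and> \<bar>\<gamma>' t\<bar> \<le> s)"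

lemma sbp_cont: "sbp s u v \<gamma> \<gamma>' \<Longrightarrow> continuous_on {u..v} \<gamma>"
  unfolding sbp_def by (rule DERIV_continuous_on) auto

lemma sbp_lip: assumes "sbp s u v \<gamma> \<gamma>'" "x \<in> {u..v}" "y \<in> {u..v}"
  shows "\<bar>\<gamma> x - \<gamma> y\<bar> \<le> s * \<bar>x - y\<bar>"
  using field_differentiable_bound[of "{u..v}" \<gamma> \<gamma>' s x y] assms unfolding sbp_def
  by (auto simp: convex_real_interval)

lemma sbp_sub: assumes "sbp s u v \<gamma> \<gamma>'" "u \<le> a" "b \<le> v" shows "sbp s a b \<gamma> \<gamma>'"
  unfolding sbp_def
proof
  fix t assume t: "t \<in> {a..b}"
  then have "t \<in> {u..v}" using assms by auto
  then have "(\<gamma> has_real_derivative \<gamma>' t) (at t within {u..v}) \<and> \<bar>\<gamma>' t\<bar> \<le> s"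
    using assms(1) unfolding sbp_def by auto
  moreover have "{a..b} \<subseteq> {u..v}" using assms by auto
  ultimately show "(\<gamma> has_real_derivative \<gamma>' t) (at t within {a..b}) \<and> \<bar>\<gamma>' t\<bar> \<le> s"
    using DERIV_subset by blast
qed

lemma open_lebesgue: "open X \<Longrightarrow> X \<in> sets lebesgue"
  by (metis borel_open sets_completionI_sets sets_lborel)

lemma closed_lebesgue: "closed X \<Longrightarrow> X \<in> sets lebesgue"
  by (metis borel_closed sets_completionI_sets sets_lborel)

lemma area_lower:
  fixes \<gamma> \<gamma>' :: "real \<Rightarrow> real" and h :: "real \<Rightarrow> 'a::real_normed_vector"
  assumes uv: "u \<le> v" and hw: "\<And>t. t \<in> {u<..<v} \<Longrightarrow> h t = w" and p: "sbp s u v \<gamma> \<gamma>'"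
  shows "measure lebesgue (Bad \<rho> w Q \<inter> {min (\<gamma> u) (\<gamma> v)..max (\<gamma> u) (\<gamma> v)})
          \<le> s * integral {u..v} (\<lambda>t. theta \<rho> (h t) (curve_pt Q (\<gamma> t)))"
proof -
  let ?S = "{t\<in>{u..v}. \<gamma> t \<in> Bad \<rho> w Q}"
  have cont: "continuous_on {u..v} \<gamma>" using p by (rule sbp_cont)
  note pc = piece[OF uv hw cont, of _ \<rho> Q]
  have Sm: "?S \<in> lmeasurable" using pc(1) by simp
  have der: "(\<gamma> has_real_derivative \<gamma>' x) (at x within ?S)" if "x \<in> ?S" for x
  proof -
    have "(\<gamma> has_real_derivative \<gamma>' x) (at x within {u..v})" using p that unfolding sbp_def by auto
    then show ?thesis by (rule DERIV_subset) auto
  qed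
  have bnd: "\<bar>\<gamma>' x\<bar> \<le> s" if "x \<in> ?S" for x using p that unfolding sbp_def by auto
  note im = image_measure_bound[OF Sm der bnd]
  have sub: "Bad \<rho> w Q \<inter> {min (\<gamma> u) (\<gamma> v)..max (\<gamma> u) (\<gamma> v)} \<subseteq> \<gamma> ` ?S"
  proof
    fix y assume y: "y \<in> Bad \<rho> w Q \<inter> {min (\<gamma> u) (\<gamma> v)..max (\<gamma> u) (\<gamma> v)}"
    have "\<exists>x. u \<le> x \<and> x \<le> v \<and> \<gamma> x = y"
    proof (cases "\<gamma> u \<le> \<gamma> v")
      case True
      then show ?thesis using y IVT'[of \<gamma> u y v, OF _ _ uv cont] by auto
    next
      case False
      then show ?thesis using y IVT2'[of \<gamma> v y u, OF _ _ uv cont] by auto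
    qed
    then show "y \<in> \<gamma> ` ?S" using y by force
  qed
  have Bm: "Bad \<rho> w Q \<inter> {min (\<gamma> u) (\<gamma> v)..max (\<gamma> u) (\<gamma> v)} \<in> sets lebesgue"
    using open_Bad by (intro sets.Int open_lebesgue closed_lebesgue) auto
  have "measure lebesgue (Bad \<rho> w Q \<inter> {min (\<gamma> u) (\<gamma> v)..max (\<gamma> u) (\<gamma> v)}) \<le> measure lebesgue (\<gamma> ` ?S)"
    using im sub Bm by (intro measure_mono_fmeasurable) auto
  also have "\<dots> \<le> s * measure lebesgue ?S" using im by auto
  also have "measure lebesgue ?S = integral {u..v} (\<lambda>t. theta \<rho> (h t) (curve_pt Q (\<gamma> t)))"
    using pc(3) by simp
  finally show ?thesis .
qed

lemma area_linear:
  fixes h :: "real \<Rightarrow> 'a::real_normed_vector"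
  assumes uv: "u \<le> v" and hw: "\<And>t. t \<in> {u<..<v} \<Longrightarrow> h t = w" and s: "s > 0" and c: "\<bar>c\<bar> = s"
  shows "s * integral {u..v} (\<lambda>t. theta \<rho> (h t) (curve_pt Q (a + c * (t - u))))
          \<le> measure lebesgue (Bad \<rho> w Q \<inter> {min a (a + c * (v - u))..max a (a + c * (v - u))})"
proof -
  let ?l = "\<lambda>t. a + c * (t - u)"
  let ?S = "{t\<in>{u..v}. ?l t \<in> Bad \<rho> w Q}"
  let ?B = "Bad \<rho> w Q \<inter> {min a (a + c * (v - u))..max a (a + c * (v - u))}"
  have cont: "continuous_on {u..v} ?l" by (intro continuous_intros)
  note pc = piece[OF uv hw cont, of _ \<rho> Q]
  have c0: "c \<noteq> 0" using c s by auto
  let ?li = "\<lambda>y. u + (y - a) / c"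
  have Bm: "?B \<in> lmeasurable"
    using open_Bad by (intro bounded_set_imp_lmeasurable sets.Int open_lebesgue closed_lebesgue) (auto simp: bounded_Int)
  have der: "(?li has_real_derivative (1 / c)) (at y within ?B)" for y
    using c0 by (auto intro!: derivative_eq_intros)
  have bnd: "\<bar>1 / c\<bar> \<le> 1 / s" using c s by simp
  note im = image_measure_bound[OF Bm der bnd]
  have Seq: "?S = ?li ` ?B"
  proof
    show "?S \<subseteq> ?li ` ?B"
    proof
      fix t assume t: "t \<in> ?S"
      have "?l t \<in> {min a (a + c * (v - u))..max a (a + c * (v - u))}"
      proof (cases "c > 0")
        case True
        then show ?thesis using t by (auto simp: mult_left_mono)
      next
        case False
        then have cn: "c < 0" using c0 by auto
        have t1: "u \<le> t" "t \<le> v" using t by auto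
        have "c * (v - u) \<le> c * (t - u)" using cn t1 by (intro mult_left_mono_neg) auto
        moreover have "c * (t - u) \<le> 0" using cn t1 by (simp add: mult_nonpos_nonneg)
        ultimately show ?thesis by auto
      qed
      moreover have "?li (?l t) = t" using c0 by simp
      ultimately show "t \<in> ?li ` ?B" using t by (metis (no_types, lifting) IntI image_eqI mem_Collect_eq)
    qed
  next
    show "?li ` ?B \<subseteq> ?S"
    proof
      fix t assume "t \<in> ?li ` ?B"
      then obtain y where y: "y \<in> ?B" "t = ?li y" by blast
      have l: "?l t = y" using y(2) c0 by simp
      have "u \<le> t \<and> t \<le> v"
      proof (cases "c > 0")
        case True
        then have "0 \<le> (y - a) / c" "(y - a) / c \<le> v - u" using y(1) uv
          by (auto simp: divide_simps min_def max_def mult.commute split: if_splits)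
        then show ?thesis using y(2) by auto
      next
        case False
        then have cn: "c < 0" using c0 by auto
        have cv: "c * (v - u) \<le> 0" using cn uv by (simp add: mult_nonpos_nonneg)
        then have yb: "a + c * (v - u) \<le> y" "y \<le> a" using y(1) by auto
        have "0 \<le> (y - a) / c" using yb cn by (simp add: divide_nonpos_neg)
        moreover have "(y - a) / c \<le> v - u" using yb cn by (simp add: neg_divide_le_eq mult.commute)
        ultimately have "0 \<le> (y - a) / c" "(y - a) / c \<le> v - u" by auto
        then show ?thesis using y(2) by auto
      qed
      then show "t \<in> ?S" using l y(1) by auto
    qed
  qed
  have "s * integral {u..v} (\<lambda>t. theta \<rho> (h t) (curve_pt Q (?l t))) = s * measure lebesgue ?S"
    using pc(3) by simp
  also have "\<dots> \<le> s * (1 / s * measure lebesgue ?B)"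
    using im Seq s by (intro mult_left_mono) auto
  also have "\<dots> = measure lebesgue ?B" using s by simp
  finally show ?thesis .
qed

definition pcw :: "nat \<Rightarrow> (nat \<Rightarrow> real) \<Rightarrow> (real \<Rightarrow> 'a) \<Rightarrow> real \<Rightarrow> real \<Rightarrow> bool" where
  "pcw k b h A B \<longleftrightarrow> b 0 = A \<and> b k = B \<and> (\<forall>j<k. b j \<le> b (Suc j)) \<and>
     (\<forall>j<k. \<exists>w. \<forall>t\<in>{b j<..<b (Suc j)}. h t = w)"

lemma meas_Icc: "measure lebesgue {a..b::real} = max 0 (b - a)"
  by fastforce

lemma pcw_mono: assumes "pcw k b h A B" "j \<le> l" "l \<le> k" shows "b j \<le> b l"
  using assms(2,3)
proof (induction l)
  case 0 then show ?case by simp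
next
  case (Suc l)
  show ?case
  proof (cases "j = Suc l")
    case True then show ?thesis by simp
  next
    case False
    then have "b j \<le> b l" using Suc by auto
    also have "b l \<le> b (Suc l)" using assms(1) Suc.prems unfolding pcw_def by auto
    finally show ?thesis .
  qed
qed

lemma pcw_le: "pcw k b h A B \<Longrightarrow> A \<le> B"
  using pcw_mono[of k b h A B 0 k] unfolding pcw_def by auto

lemma pcw_Suc: assumes "pcw (Suc k) b h A B"
  shows "pcw k b h A (b k)" "A \<le> b k" "b k \<le> B" "\<exists>w. \<forall>t\<in>{b k<..<B}. h t = w"
proof -
  show "pcw k b h A (b k)" using assms unfolding pcw_def by auto
  show "A \<le> b k" using pcw_mono[OF assms, of 0 k] assms unfolding pcw_def by auto
  show "b k \<le> B" using assms unfolding pcw_def by auto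
  show "\<exists>w. \<forall>t\<in>{b k<..<B}. h t = w" using assms unfolding pcw_def by auto
qed

lemma pcw_clip: assumes "pcw k b h A B" "A \<le> u" "u \<le> v" "v \<le> B"
  shows "pcw k (\<lambda>j. max u (min v (b j))) h u v"
  unfolding pcw_def
proof (intro conjI allI impI)
  show "max u (min v (b 0)) = u" using assms unfolding pcw_def by auto
  show "max u (min v (b k)) = v" using assms unfolding pcw_def by auto
  fix j assume j: "j < k"
  have bj: "b j \<le> b (Suc j)" using assms j unfolding pcw_def by auto
  then show "max u (min v (b j)) \<le> max u (min v (b (Suc j)))" by auto
  obtain w where w: "\<forall>t\<in>{b j<..<b (Suc j)}. h t = w" using assms(1) j unfolding pcw_def by blast
  show "\<exists>w. \<forall>t\<in>{max u (min v (b j))<..<max u (min v (b (Suc j)))}. h t = w"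
  proof (rule exI[of _ w], rule ballI)
    fix t assume "t \<in> {max u (min v (b j))<..<max u (min v (b (Suc j)))}"
    then have "t \<in> {b j<..<b (Suc j)}" using assms(3)
      by (auto simp: min_le_iff_disj le_max_iff_disj less_max_iff_disj max_less_iff_conj min_less_iff_disj)
    then show "h t = w" using w by auto
  qed
qed

lemma pcw_int:
  fixes h :: "real \<Rightarrow> 'a::real_normed_vector"
  assumes "pcw k b h A B" "continuous_on {A..B} \<gamma>"
  shows "(\<lambda>t. theta \<rho> (h t) (curve_pt Q (\<gamma> t))) integrable_on {A..B}"
  using assms
proof (induction k arbitrary: B)
  case 0
  then have "A = B" unfolding pcw_def by auto
  then show ?case by (metis box_real(2) integrable_on_refl)
next
  case (Suc k)
  note S = pcw_Suc[OF Suc.prems(1)]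
  obtain w where w: "\<forall>t\<in>{b k<..<B}. h t = w" using S(4) by auto
  have i1: "(\<lambda>t. theta \<rho> (h t) (curve_pt Q (\<gamma> t))) integrable_on {A..b k}"
    using Suc.IH[OF S(1)] continuous_on_subset[OF Suc.prems(2)] S by auto
  have i2: "(\<lambda>t. theta \<rho> (h t) (curve_pt Q (\<gamma> t))) integrable_on {b k..B}"
    using piece(2)[OF S(3), of h w \<gamma> \<rho> Q] w continuous_on_subset[OF Suc.prems(2)] S by auto
  show ?case by (rule Henstock_Kurzweil_Integration.integrable_combine[OF S(2) S(3) i1 i2])
qed

lemma seg_cover1:
  fixes lp lq gp gq d :: real
  shows "lp \<le> lq \<Longrightarrow> gp \<le> lp \<Longrightarrow> gq \<le> lq \<Longrightarrow> lq \<le> gq + d \<Longrightarrow>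
  {min lp lq..max lp lq} \<subseteq> {min gp gq..max gp gq} \<union> {min gq (gq + d)..max gq (gq + d)}"
  by (auto simp: min_le_iff_disj le_max_iff_disj)

lemma seg_cover2:
  fixes lp lq gp gq d :: real
  shows "-lp \<le> -lq \<Longrightarrow> -gp \<le> -lp \<Longrightarrow> -gq \<le> -lq \<Longrightarrow> -lq \<le> -gq + d \<Longrightarrow>
  {min lp lq..max lp lq} \<subseteq> {min gp gq..max gp gq} \<union> {min gq (gq - d)..max gq (gq - d)}"
  by (auto simp: min_le_iff_disj le_max_iff_disj)

lemma seg_cover:
  fixes e lp lq gp gq d :: real
  assumes e: "e = 1 \<or> e = -1" and le: "e * lp \<le> e * lq"
    and gp: "e * gp \<le> e * lp" and gq1: "e * gq \<le> e * lq" and gq2: "e * lq \<le> e * gq + d"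
  shows "{min lp lq..max lp lq} \<subseteq> {min gp gq..max gp gq} \<union> {min gq (gq + e * d)..max gq (gq + e * d)}"
  using e
proof
  assume e1: "e = 1" show ?thesis using seg_cover1[of lp lq gp gq d] assms unfolding e1 by simp
next
  assume e1: "e = -1" show ?thesis using seg_cover2[of lp lq gp gq d] assms unfolding e1 by simp
qed

lemma tail_est:
  fixes h :: "real \<Rightarrow> 'a::real_normed_vector"
  assumes pc: "pcw k b h u v" and p: "sbp s u v \<gamma> \<gamma>'" and s: "s > 0" and e: "e = 1 \<or> e = -1"
    and W: "\<And>t. t \<in> {u..v} \<Longrightarrow> a + e * s * (t - u) = \<gamma> t + e * W t \<and> 0 \<le> W t \<and> W t \<le> d"
  shows "integral {u..v} (\<lambda>t. theta \<rho> (h t) (curve_pt Q (a + e * s * (t - u))))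
          \<le> integral {u..v} (\<lambda>t. theta \<rho> (h t) (curve_pt Q (\<gamma> t))) + k * d / s"
  using pc p W
proof (induction k arbitrary: v)
  case 0
  then have "u = v" unfolding pcw_def by auto
  then show ?case by simp
next
  case (Suc k)
  note S = pcw_Suc[OF Suc.prems(1)]
  let ?c = "b k"
  let ?l = "\<lambda>t. a + e * s * (t - u)"
  obtain w where w: "\<And>t. t \<in> {?c<..<v} \<Longrightarrow> h t = w" using S(4) by auto
  have contg: "continuous_on {u..v} \<gamma>" using Suc.prems(2) by (rule sbp_cont)
  have contl: "continuous_on {u..v} ?l" by (intro continuous_intros)
  have IH: "integral {u..?c} (\<lambda>t. theta \<rho> (h t) (curve_pt Q (?l t)))
          \<le> integral {u..?c} (\<lambda>t. theta \<rho> (h t) (curve_pt Q (\<gamma> t))) + k * d / s"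
    using Suc.IH[OF S(1) sbp_sub[OF Suc.prems(2)]] Suc.prems(3) S by auto
  have A1: "measure lebesgue (Bad \<rho> w Q \<inter> {min (\<gamma> ?c) (\<gamma> v)..max (\<gamma> ?c) (\<gamma> v)})
          \<le> s * integral {?c..v} (\<lambda>t. theta \<rho> (h t) (curve_pt Q (\<gamma> t)))"
    by (rule area_lower[OF S(3) w sbp_sub[OF Suc.prems(2)]]) (use S in auto)
  have lc: "?l t = ?l ?c + (e * s) * (t - ?c)" for t by (simp add: algebra_simps)
  have es: "\<bar>e * s\<bar> = s" using e s by auto
  have A2: "s * integral {?c..v} (\<lambda>t. theta \<rho> (h t) (curve_pt Q (?l ?c + (e * s) * (t - ?c))))
          \<le> measure lebesgue (Bad \<rho> w Q \<inter> {min (?l ?c) (?l ?c + (e * s) * (v - ?c))..max (?l ?c) (?l ?c + (e * s) * (v - ?c))})"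
    by (rule area_linear[OF S(3) w s es])
  have lv: "?l ?c + (e * s) * (v - ?c) = ?l v" using lc[of v] by simp
  have Wc: "?l ?c = \<gamma> ?c + e * W ?c" "0 \<le> W ?c" "W ?c \<le> d" using Suc.prems(3)[of ?c] S by auto
  have Wv: "?l v = \<gamma> v + e * W v" "0 \<le> W v" "W v \<le> d" using Suc.prems(3)[of v] S by auto
  have ee: "e * e = 1" using e by auto
  have cover: "{min (?l ?c) (?l v)..max (?l ?c) (?l v)} \<subseteq> {min (\<gamma> ?c) (\<gamma> v)..max (\<gamma> ?c) (\<gamma> v)} \<union> {min (\<gamma> v) (\<gamma> v + e * d)..max (\<gamma> v) (\<gamma> v + e * d)}"
  proof (rule seg_cover[OF e])
    show "e * ?l ?c \<le> e * ?l v" using e S(3) s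
      by (cases "e = 1") (auto simp: algebra_simps)
    show "e * \<gamma> ?c \<le> e * ?l ?c" using Wc e by (cases "e = 1") (auto simp: algebra_simps)
    show "e * \<gamma> v \<le> e * ?l v" using Wv e by (cases "e = 1") (auto simp: algebra_simps)
    show "e * ?l v \<le> e * \<gamma> v + d" using Wv e by (cases "e = 1") (auto simp: algebra_simps)
  qed
  have Bo: "Bad \<rho> w Q \<inter> X \<in> sets lebesgue" if "closed X" for X
    using open_Bad that by (intro sets.Int open_lebesgue closed_lebesgue) auto
  have "measure lebesgue (Bad \<rho> w Q \<inter> {min (?l ?c) (?l v)..max (?l ?c) (?l v)})
      \<le> measure lebesgue ((Bad \<rho> w Q \<inter> {min (\<gamma> ?c) (\<gamma> v)..max (\<gamma> ?c) (\<gamma> v)}) \<union> {min (\<gamma> v) (\<gamma> v + e * d)..max (\<gamma> v) (\<gamma> v + e * d)})"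
  proof (rule measure_mono_fmeasurable)
    show "Bad \<rho> w Q \<inter> {min (?l ?c) (?l v)..max (?l ?c) (?l v)} \<in> sets lebesgue" by (rule Bo) simp
    show "Bad \<rho> w Q \<inter> {min (?l ?c) (?l v)..max (?l ?c) (?l v)} \<subseteq> (Bad \<rho> w Q \<inter> {min (\<gamma> ?c) (\<gamma> v)..max (\<gamma> ?c) (\<gamma> v)}) \<union> {min (\<gamma> v) (\<gamma> v + e * d)..max (\<gamma> v) (\<gamma> v + e * d)}"
      using cover by blast
    have "bounded ((Bad \<rho> w Q \<inter> {min (\<gamma> ?c) (\<gamma> v)..max (\<gamma> ?c) (\<gamma> v)}) \<union> {min (\<gamma> v) (\<gamma> v + e * d)..max (\<gamma> v) (\<gamma> v + e * d)})"
      by (simp add: bounded_Int bounded_Un)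
    moreover have "(Bad \<rho> w Q \<inter> {min (\<gamma> ?c) (\<gamma> v)..max (\<gamma> ?c) (\<gamma> v)}) \<union> {min (\<gamma> v) (\<gamma> v + e * d)..max (\<gamma> v) (\<gamma> v + e * d)} \<in> sets lebesgue"
      using Bo[of "{min (\<gamma> ?c) (\<gamma> v)..max (\<gamma> ?c) (\<gamma> v)}"] closed_lebesgue[of "{min (\<gamma> v) (\<gamma> v + e * d)..max (\<gamma> v) (\<gamma> v + e * d)}"]
      by (intro sets.Un) auto
    ultimately show "(Bad \<rho> w Q \<inter> {min (\<gamma> ?c) (\<gamma> v)..max (\<gamma> ?c) (\<gamma> v)}) \<union> {min (\<gamma> v) (\<gamma> v + e * d)..max (\<gamma> v) (\<gamma> v + e * d)} \<in> lmeasurable"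
      by (rule bounded_set_imp_lmeasurable)
  qed
  also have "\<dots> \<le> measure lebesgue (Bad \<rho> w Q \<inter> {min (\<gamma> ?c) (\<gamma> v)..max (\<gamma> ?c) (\<gamma> v)}) + measure lebesgue {min (\<gamma> v) (\<gamma> v + e * d)..max (\<gamma> v) (\<gamma> v + e * d)}"
    by (rule measure_Un_le[OF Bo closed_lebesgue]) auto
  also have "measure lebesgue {min (\<gamma> v) (\<gamma> v + e * d)..max (\<gamma> v) (\<gamma> v + e * d)} \<le> d"
    using e Wv by (auto simp: meas_Icc)
  finally have M: "measure lebesgue (Bad \<rho> w Q \<inter> {min (?l ?c) (?l v)..max (?l ?c) (?l v)})
      \<le> measure lebesgue (Bad \<rho> w Q \<inter> {min (\<gamma> ?c) (\<gamma> v)..max (\<gamma> ?c) (\<gamma> v)}) + d" by simp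
  have last: "s * integral {?c..v} (\<lambda>t. theta \<rho> (h t) (curve_pt Q (?l t)))
      \<le> s * integral {?c..v} (\<lambda>t. theta \<rho> (h t) (curve_pt Q (\<gamma> t))) + d"
  proof -
    have eqi: "(\<lambda>t. theta \<rho> (h t) (curve_pt Q (?l ?c + (e * s) * (t - ?c)))) = (\<lambda>t. theta \<rho> (h t) (curve_pt Q (?l t)))"
      by (simp only: lc[symmetric])
    show ?thesis using A1 A2 M unfolding eqi lv by linarith
  qed
  then have last': "integral {?c..v} (\<lambda>t. theta \<rho> (h t) (curve_pt Q (?l t)))
      \<le> integral {?c..v} (\<lambda>t. theta \<rho> (h t) (curve_pt Q (\<gamma> t))) + d / s"
    using s by (simp add: field_simps)
  have il: "(\<lambda>t. theta \<rho> (h t) (curve_pt Q (?l t))) integrable_on {u..v}"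
    by (rule pcw_int[OF Suc.prems(1) contl])
  have ig: "(\<lambda>t. theta \<rho> (h t) (curve_pt Q (\<gamma> t))) integrable_on {u..v}"
    by (rule pcw_int[OF Suc.prems(1) contg])
  have "integral {u..v} (\<lambda>t. theta \<rho> (h t) (curve_pt Q (?l t)))
      = integral {u..?c} (\<lambda>t. theta \<rho> (h t) (curve_pt Q (?l t))) + integral {?c..v} (\<lambda>t. theta \<rho> (h t) (curve_pt Q (?l t)))"
    using Henstock_Kurzweil_Integration.integral_combine[OF S(2) S(3) il] by simp
  also have "\<dots> \<le> integral {u..?c} (\<lambda>t. theta \<rho> (h t) (curve_pt Q (\<gamma> t))) + k * d / s
      + (integral {?c..v} (\<lambda>t. theta \<rho> (h t) (curve_pt Q (\<gamma> t))) + d / s)"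
    using IH last' by linarith
  also have "\<dots> = integral {u..v} (\<lambda>t. theta \<rho> (h t) (curve_pt Q (\<gamma> t))) + real (Suc k) * d / s"
    using Henstock_Kurzweil_Integration.integral_combine[OF S(2) S(3) ig] by (simp add: add_divide_distrib algebra_simps)
  finally show ?case .
qed

lemma DERIV_Un:
  assumes "(f has_field_derivative D) (at x within S)" "(f has_field_derivative D) (at x within T)"
  shows "(f has_field_derivative D) (at x within S \<union> T)"
proof -
  have "((\<lambda>y. (f y - f x) / (y - x)) \<longlongrightarrow> D) (at x within S \<union> T)"
    using assms unfolding has_field_derivative_iff at_within_union by (rule filterlim_sup)
  then show ?thesis by (simp add: has_field_derivative_iff)
qed

lemma DERIV_split:
  fixes f :: "real \<Rightarrow> real"
  assumes "(f has_real_derivative D) (at x within {..x})" "(f has_real_derivative D) (at x within {x..})"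
  shows "(f has_real_derivative D) (at x)"
proof -
  have "{..x} \<union> {x..} = UNIV" by auto
  then show ?thesis using DERIV_Un[OF assms] by simp
qed

definition sstep :: "real \<Rightarrow> real" where
  "sstep x = (if x \<le> 0 then 0 else if x \<le> 1 then 3 * x^2 - 2 * x^3 else 1)"

definition dsstep :: "real \<Rightarrow> real" where
  "dsstep x = (if x \<le> 0 then 0 else if x \<le> 1 then 6 * x - 6 * x^2 else 0)"

lemma sstep_simps: "x \<le> 0 \<Longrightarrow> sstep x = 0" "1 \<le> x \<Longrightarrow> sstep x = 1"
  "x \<le> 0 \<Longrightarrow> dsstep x = 0" "1 \<le> x \<Longrightarrow> dsstep x = 0"
  by (auto simp: sstep_def dsstep_def)

lemma sstep_bounds: "0 \<le> sstep x" "sstep x \<le> 1" "0 \<le> dsstep x"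
proof -
  show "0 \<le> sstep x"
  proof (cases "0 < x \<and> x \<le> 1")
    case True
    then have "0 \<le> x^2 * (3 - 2 * x)" by (intro mult_nonneg_nonneg) auto
    then show ?thesis using True by (simp add: sstep_def algebra_simps power2_eq_square power3_eq_cube)
  qed (auto simp: sstep_def)
  show "sstep x \<le> 1"
  proof (cases "0 < x \<and> x \<le> 1")
    case True
    then have "0 \<le> (1 - x)^2 * (1 + 2 * x)" by (intro mult_nonneg_nonneg) auto
    then show ?thesis using True by (simp add: sstep_def algebra_simps power2_eq_square power3_eq_cube)
  qed (auto simp: sstep_def)
  show "0 \<le> dsstep x"
  proof (cases "0 < x \<and> x \<le> 1")
    case True
    then have "0 \<le> 6 * x * (1 - x)" by (intro mult_nonneg_nonneg) auto
    then show ?thesis using True by (simp add: dsstep_def algebra_simps power2_eq_square)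
  qed (auto simp: dsstep_def)
qed

lemma cubic_deriv: "((\<lambda>x::real. 3 * x^2 - 2 * x^3) has_real_derivative (6 * x - 6 * x^2)) (at x within S)"
  by (auto intro!: derivative_eq_intros simp: power2_eq_square)

lemma sstep_deriv: "(sstep has_real_derivative dsstep x) (at x)"
proof -
  consider "x < 0" | "x = 0" | "0 < x \<and> x < 1" | "x = 1" | "1 < x" by linarith
  then show ?thesis
  proof cases
    case 1
    then have dx: "dsstep x = 0" by (simp add: dsstep_def)
    have "((\<lambda>_. 0) has_real_derivative 0) (at x)" by simp
    then have "(sstep has_real_derivative 0) (at x)"
      by (rule has_field_derivative_transform_within_open[where S="{..<0}"]) (use 1 in \<open>auto simp: sstep_def\<close>)
    then show ?thesis using dx by simp
  next
    case 2
    then have dx: "dsstep x = 0" by (simp add: dsstep_def)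
    have "(sstep has_real_derivative 0) (at x)"
    proof (rule DERIV_split)
      have "((\<lambda>_. 0) has_real_derivative 0) (at x within {..x})" by simp
      then show "(sstep has_real_derivative 0) (at x within {..x})"
        by (rule has_field_derivative_transform_within[where d=1]) (use 2 in \<open>auto simp: sstep_def\<close>)
      have "((\<lambda>x::real. 3 * x^2 - 2 * x^3) has_real_derivative (6 * x - 6 * x^2)) (at x within {x..})"
        by (rule cubic_deriv)
      then have "((\<lambda>x::real. 3 * x^2 - 2 * x^3) has_real_derivative 0) (at x within {x..})"
        using 2 by simp
      then show "(sstep has_real_derivative 0) (at x within {x..})"
        by (rule has_field_derivative_transform_within[where d=1]) (use 2 in \<open>auto simp: sstep_def dist_real_def\<close>)
    qed
    then show ?thesis using dx by simp
  next
    case 3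
    then have dx: "dsstep x = 6 * x - 6 * x^2" by (simp add: dsstep_def)
    have "((\<lambda>x::real. 3 * x^2 - 2 * x^3) has_real_derivative (6 * x - 6 * x^2)) (at x)"
      by (rule cubic_deriv)
    then have "(sstep has_real_derivative (6 * x - 6 * x^2)) (at x)"
      by (rule has_field_derivative_transform_within_open[where S="{0<..<1}"]) (use 3 in \<open>auto simp: sstep_def\<close>)
    then show ?thesis using dx by simp
  next
    case 4
    then have dx: "dsstep x = 0" by (simp add: dsstep_def)
    have "(sstep has_real_derivative 0) (at x)"
    proof (rule DERIV_split)
      have "((\<lambda>x::real. 3 * x^2 - 2 * x^3) has_real_derivative (6 * x - 6 * x^2)) (at x within {..x})"
        by (rule cubic_deriv)
      then have "((\<lambda>x::real. 3 * x^2 - 2 * x^3) has_real_derivative 0) (at x within {..x})"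
        using 4 by simp
      then show "(sstep has_real_derivative 0) (at x within {..x})"
        by (rule has_field_derivative_transform_within[where d=1]) (use 4 in \<open>auto simp: sstep_def dist_real_def\<close>)
      have "((\<lambda>_. 1) has_real_derivative 0) (at x within {x..})" by simp
      then show "(sstep has_real_derivative 0) (at x within {x..})"
        by (rule has_field_derivative_transform_within[where d=1]) (use 4 in \<open>auto simp: sstep_def\<close>)
    qed
    then show ?thesis using dx by simp
  next
    case 5
    then have dx: "dsstep x = 0" by (simp add: dsstep_def)
    have "((\<lambda>_. 1) has_real_derivative 0) (at x)" by simp
    then have "(sstep has_real_derivative 0) (at x)"
      by (rule has_field_derivative_transform_within_open[where S="{1<..}"]) (use 5 in \<open>auto simp: sstep_def\<close>)
    then show ?thesis using dx by simp
  qed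
qed

lemma dsstep_cont: "continuous_on UNIV dsstep"
proof -
  have "continuous_on UNIV (\<lambda>x. if x \<le> 0 then 0 else (if x \<le> 1 then 6 * x - 6 * x^2 else (0::real)))"
  proof (rule continuous_on_cases_le[where h="\<lambda>x. x" and a=0])
    show "continuous_on {x \<in> UNIV. (x::real) \<le> 0} (\<lambda>x. 0::real)" by simp
    show "continuous_on {x \<in> UNIV. 0 \<le> (x::real)} (\<lambda>x. if x \<le> 1 then 6 * x - 6 * x^2 else (0::real))"
    proof (rule continuous_on_cases_le[where h="\<lambda>x. x" and a=1])
    qed (auto intro!: continuous_intros)
  qed (auto intro!: continuous_intros)
  then show ?thesis by (simp add: dsstep_def[abs_def])
qed

lemma sstep_cont: "continuous_on UNIV sstep"
  using sstep_deriv by (intro DERIV_continuous_on) (auto intro: DERIV_subset)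

lemma conv_bound:
  fixes p x s :: real
  assumes "0 \<le> p" "p \<le> 1" "\<bar>x\<bar> \<le> s"
  shows "\<bar>x + p * (s - x)\<bar> \<le> s" "\<bar>x - p * (s + x)\<bar> \<le> s"
proof -
  have a: "p * (s - x) \<le> s - x" using mult_right_mono[of p 1 "s - x"] assms by simp
  have b: "0 \<le> p * (s - x)" using assms by auto
  have x1: "-s \<le> x" "x \<le> s" using assms(3) by auto
  show "\<bar>x + p * (s - x)\<bar> \<le> s" unfolding abs_le_iff using a b x1 by (intro conjI; linarith)
  have c: "p * (s + x) \<le> s + x" using mult_right_mono[of p 1 "s + x"] assms by simp
  have d: "0 \<le> p * (s + x)" using assms by auto
  show "\<bar>x - p * (s + x)\<bar> \<le> s" unfolding abs_le_iff using c d x1 by (intro conjI; linarith)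
qed

lemma psi_deriv: assumes "\<delta> \<noteq> 0" shows
  "((\<lambda>t. sstep ((t - \<tau>) / \<delta> + 1)) has_real_derivative dsstep ((t - \<tau>) / \<delta> + 1) / \<delta>) (at t)"
proof -
  have "((\<lambda>t. (t - \<tau>) / \<delta> + 1) has_real_derivative 1 / \<delta>) (at t)"
    using assms by (auto intro!: derivative_eq_intros)
  from DERIV_chain2[OF sstep_deriv this] show ?thesis by simp
qed

lemma psi_cont: "\<delta> \<noteq> 0 \<Longrightarrow> continuous_on S (\<lambda>t. dsstep ((t - \<tau>) / \<delta> + 1) / \<delta>)"
  by (intro continuous_intros continuous_on_compose2[OF dsstep_cont]) auto

lemma end_mod:
  fixes \<gamma> \<gamma>' :: "real \<Rightarrow> real" and h :: "real \<Rightarrow> 'a::real_normed_vector"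
  assumes AB: "A \<le> B" and s: "0 < s" and p: "sbp s A B \<gamma> \<gamma>'"
    and rng: "\<gamma> ` {A..B} \<subseteq> {0..L}"
    and e: "e = 1 \<or> e = -1" and d: "0 < d"
    and nu: "\<gamma> B + e * d \<in> {0..L}"
    and feas: "e * (\<gamma> B + e * d - \<gamma> A) \<le> s * (B - A)"
    and del: "0 < \<delta>"
    and pc: "pcw k b h A B"
  shows "\<exists>\<gamma>2 \<gamma>2'. sbp s A B \<gamma>2 \<gamma>2' \<and> \<gamma>2 ` {A..B} \<subseteq> {0..L} \<and> \<gamma>2 A = \<gamma> A \<and> \<gamma>2 B = \<gamma> B + e * d
      \<and> \<gamma>2' B = e * s
      \<and> integral {A..B} (\<lambda>t. theta \<rho> (h t) (curve_pt Q (\<gamma>2 t)))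
         \<le> integral {A..B} (\<lambda>t. theta \<rho> (h t) (curve_pt Q (\<gamma> t))) + \<delta> + k * d / s"
proof -
  have ee: "e * e = 1" using e by auto
  define g where "g t = s * (t - A) - e * (\<gamma> t - \<gamma> A)" for t
  have gA: "g A = 0" by (simp add: g_def)
  have gmono: "g x \<le> g y" if "A \<le> x" "x \<le> y" "y \<le> B" for x y
  proof -
    have "\<bar>\<gamma> y - \<gamma> x\<bar> \<le> s * \<bar>y - x\<bar>" using sbp_lip[OF p, of y x] that by auto
    moreover have "e * (\<gamma> y - \<gamma> x) \<le> \<bar>\<gamma> y - \<gamma> x\<bar>" using e by auto
    ultimately show ?thesis using that by (simp add: g_def algebra_simps)
  qed
  have gB: "d \<le> g B"
  proof -
    have "e * (\<gamma> B + e * d - \<gamma> A) = e * (\<gamma> B - \<gamma> A) + d"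
      using ee by (simp add: algebra_simps)
    then show ?thesis using feas by (simp add: g_def)
  qed
  have AltB: "A < B"
  proof (rule ccontr)
    assume "\<not> A < B" then have "B = A" using AB by auto
    then show False using gB gA d by simp
  qed
  have contg_gamma: "continuous_on {A..B} \<gamma>" using p by (rule sbp_cont)
  have gcont: "continuous_on {A..B} g"
    unfolding g_def by (intro continuous_intros contg_gamma)
  have gder: "(g has_real_derivative (s - e * \<gamma>' t)) (at t within {A..B})" if "t \<in> {A..B}" for t
  proof -
    have "(\<gamma> has_real_derivative \<gamma>' t) (at t within {A..B})" using p that unfolding sbp_def by auto
    then show ?thesis unfolding g_def by (auto intro!: derivative_eq_intros)
  qed
  have gder_nn: "0 \<le> s - e * \<gamma>' t" if "t \<in> {A..B}" for t
  proof -
    have "\<bar>\<gamma>' t\<bar> \<le> s" using p that unfolding sbp_def by auto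
    then show ?thesis using e by auto
  qed
  obtain \<eta> where eta: "\<eta> > 0" "\<And>t. t \<in> {A..B} \<Longrightarrow> dist t B < \<eta> \<Longrightarrow> dist (g t) (g B) < d"
    using gcont d AB unfolding continuous_on_iff by (metis atLeastAtMost_iff order_refl)
  define \<delta>0 where "\<delta>0 = min \<delta> (min ((B - A) / 2) (\<eta> / 3))"
  have d0: "0 < \<delta>0" "\<delta>0 \<le> \<delta>" "2 * \<delta>0 \<le> B - A" "2 * \<delta>0 < \<eta>"
  proof -
    have "\<delta>0 \<le> (B - A) / 2" "\<delta>0 \<le> \<eta> / 3" "\<delta>0 \<le> \<delta>" unfolding \<delta>0_def
      by (meson min.cobounded1 min.cobounded2 order_trans)+
    moreover have "0 < \<delta>0" using del AltB eta(1) unfolding \<delta>0_def by auto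
    ultimately show "0 < \<delta>0" "\<delta>0 \<le> \<delta>" "2 * \<delta>0 \<le> B - A" "2 * \<delta>0 < \<eta>" using eta(1) by auto
  qed
  have gclose: "g B - g (B - 2 * \<delta>0) < d"
  proof -
    have "dist (g (B - 2 * \<delta>0)) (g B) < d" using eta(2)[of "B - 2 * \<delta>0"] d0 by (auto simp: dist_real_def)
    then show ?thesis by (simp add: dist_real_def)
  qed
  define \<psi> where "\<psi> \<tau> t = sstep ((t - \<tau>) / \<delta>0 + 1)" for \<tau> t
  define \<psi>' where "\<psi>' \<tau> t = dsstep ((t - \<tau>) / \<delta>0 + 1) / \<delta>0" for \<tau> t
  define W where "W \<tau> t = \<psi> \<tau> t * g t - integral {A..t} (\<lambda>u. \<psi>' \<tau> u * g u)" for \<tau> t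
  have psi_d: "((\<psi> \<tau>) has_real_derivative \<psi>' \<tau> t) (at t)" for \<tau> t
    unfolding \<psi>_def \<psi>'_def using d0(1) by (intro psi_deriv) simp
  have psi'_nn: "0 \<le> \<psi>' \<tau> t" for \<tau> t
    unfolding \<psi>'_def using sstep_bounds(3) d0(1) by simp
  have psi_01: "0 \<le> \<psi> \<tau> t" "\<psi> \<tau> t \<le> 1" for \<tau> t
    unfolding \<psi>_def using sstep_bounds by auto
  have psi_lo: "\<psi> \<tau> t = 0" "\<psi>' \<tau> t = 0" if "t \<le> \<tau> - \<delta>0" for \<tau> t
  proof -
    have "(t - \<tau>) / \<delta>0 \<le> -1" using that d0(1) by (simp add: divide_simps)
    then show "\<psi> \<tau> t = 0" "\<psi>' \<tau> t = 0" unfolding \<psi>_def \<psi>'_def by (auto simp: sstep_simps)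
  qed
  have psi_hi: "\<psi> \<tau> t = 1" "\<psi>' \<tau> t = 0" if "\<tau> \<le> t" for \<tau> t
  proof -
    have "0 \<le> (t - \<tau>) / \<delta>0" using that d0(1) by simp
    then show "\<psi> \<tau> t = 1" "\<psi>' \<tau> t = 0" unfolding \<psi>_def \<psi>'_def by (auto simp: sstep_simps)
  qed
  have intcont: "continuous_on {A..B} (\<lambda>u. \<psi>' \<tau> u * g u)" for \<tau>
    unfolding \<psi>'_def using d0(1) by (intro continuous_intros psi_cont gcont) simp
  define \<Phi> where "\<Phi> \<tau> = W \<tau> B" for \<tau>
  have Phi_cont: "continuous_on {A..B - \<delta>0} \<Phi>"
  proof -
    have c1: "continuous_on {A..B - \<delta>0} (\<lambda>\<tau>. \<psi> \<tau> B * g B)"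
      unfolding \<psi>_def by (intro continuous_intros continuous_on_compose2[OF sstep_cont]) (use d0 in auto)
    have c2: "continuous_on {A..B - \<delta>0} (\<lambda>\<tau>. integral (cbox A B) (\<lambda>u. \<psi>' \<tau> u * g u))"
    proof (rule integral_continuous_on_param)
      have "continuous_on ({A..B - \<delta>0} \<times> cbox A B) (\<lambda>x. dsstep ((snd x - fst x) / \<delta>0 + 1) / \<delta>0 * g (snd x))"
      proof (intro continuous_intros continuous_on_compose2[OF dsstep_cont] continuous_on_compose2[OF gcont])
      qed (use d0 in auto)
      then show "continuous_on ({A..B - \<delta>0} \<times> cbox A B) (\<lambda>(x, t). \<psi>' x t * g t)"
        by (simp add: \<psi>'_def split_def)
    qed
    show ?thesis using continuous_on_diff[OF c1 c2] unfolding \<Phi>_def W_def by simp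
  qed
  have PhiA: "d \<le> \<Phi> A"
  proof -
    have "integral {A..B} (\<lambda>u. \<psi>' A u * g u) = integral {A..B} (\<lambda>u. 0::real)"
      by (rule integral_cong) (auto simp: psi_hi)
    then have "integral {A..B} (\<lambda>u. \<psi>' A u * g u) = 0" by simp
    then show ?thesis using gB AB by (simp add: \<Phi>_def W_def psi_hi)
  qed
  have PhiB: "\<Phi> (B - \<delta>0) < d"
  proof -
    let ?t = "B - \<delta>0"
    have i1: "(\<lambda>u. \<psi>' ?t u * g u) integrable_on {A..B}" using intcont by (rule integrable_continuous_real)
    have ftc: "((\<psi>' ?t) has_integral (\<psi> ?t B - \<psi> ?t A)) {A..B}"
    proof (rule fundamental_theorem_of_calculus[OF AB])
      fix x assume "x \<in> {A..B}"
      show "(\<psi> ?t has_vector_derivative \<psi>' ?t x) (at x within {A..B})"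
        using psi_d[of ?t x] by (simp add: has_real_derivative_iff_has_vector_derivative[symmetric] has_field_derivative_at_within)
    qed
    have psiA: "\<psi> ?t A = 0" using psi_lo[of A ?t] d0 by auto
    have psiB: "\<psi> ?t B = 1" using psi_hi[of ?t B] d0 by auto
    have i2: "((\<lambda>u. \<psi>' ?t u * g (B - 2 * \<delta>0)) has_integral (1 * g (B - 2 * \<delta>0))) {A..B}"
      using has_integral_mult_left[OF ftc, of "g (B - 2 * \<delta>0)"] psiA psiB by simp
    have le: "\<psi>' ?t u * g (B - 2 * \<delta>0) \<le> \<psi>' ?t u * g u" if "u \<in> {A..B}" for u
    proof (cases "u \<le> B - 2 * \<delta>0")
      case True
      then have "\<psi>' ?t u = 0" using psi_lo[of u ?t] by auto
      then show ?thesis by simp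
    next
      case False
      then have "g (B - 2 * \<delta>0) \<le> g u" using that d0 by (intro gmono) auto
      then show ?thesis using psi'_nn by (intro mult_left_mono) auto
    qed
    have "g (B - 2 * \<delta>0) \<le> integral {A..B} (\<lambda>u. \<psi>' ?t u * g u)"
      using has_integral_le[OF i2 integrable_integral[OF i1] le] by simp
    then show ?thesis using gclose psiB unfolding \<Phi>_def W_def by simp
  qed
  obtain \<tau> where tau: "A \<le> \<tau>" "\<tau> \<le> B - \<delta>0" "\<Phi> \<tau> = d"
    using IVT2'[of \<Phi> "B - \<delta>0" d A] PhiA PhiB Phi_cont d0 by auto
  define W0 where "W0 = W \<tau>"
  define \<gamma>2 where "\<gamma>2 t = \<gamma> t + e * W0 t" for t
  define \<gamma>2' where "\<gamma>2' t = \<gamma>' t + e * (\<psi> \<tau> t * (s - e * \<gamma>' t))" for t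
  have W0der: "(W0 has_real_derivative \<psi> \<tau> t * (s - e * \<gamma>' t)) (at t within {A..B})" if t: "t \<in> {A..B}" for t
  proof -
    have d1: "((\<lambda>t. \<psi> \<tau> t * g t) has_real_derivative \<psi> \<tau> t * (s - e * \<gamma>' t) + \<psi>' \<tau> t * g t) (at t within {A..B})"
      using DERIV_mult'[OF has_field_derivative_at_within[OF psi_d] gder[OF t]] by simp
    have d2: "((\<lambda>x. integral {A..x} (\<lambda>u. \<psi>' \<tau> u * g u)) has_real_derivative \<psi>' \<tau> t * g t) (at t within {A..B})"
      by (rule integral_has_real_derivative[OF intcont t])
    from DERIV_diff[OF d1 d2] show ?thesis unfolding W0_def W_def by simp
  qed
  have sbp2: "sbp s A B \<gamma>2 \<gamma>2'"
    unfolding sbp_def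
  proof
    fix t assume t: "t \<in> {A..B}"
    have dg: "(\<gamma> has_real_derivative \<gamma>' t) (at t within {A..B})" and bg: "\<bar>\<gamma>' t\<bar> \<le> s"
      using p t unfolding sbp_def by auto
    have "(\<gamma>2 has_real_derivative \<gamma>' t + e * (\<psi> \<tau> t * (s - e * \<gamma>' t))) (at t within {A..B})"
      unfolding \<gamma>2_def by (intro DERIV_add dg DERIV_cmult W0der t)
    moreover have "\<bar>\<gamma>2' t\<bar> \<le> s"
      using e
    proof
      assume "e = 1" then show ?thesis unfolding \<gamma>2'_def using conv_bound(1)[OF psi_01 bg] by simp
    next
      assume "e = -1" then show ?thesis unfolding \<gamma>2'_def using conv_bound(2)[OF psi_01 bg] by simp
    qed
    ultimately show "(\<gamma>2 has_real_derivative \<gamma>2' t) (at t within {A..B}) \<and> \<bar>\<gamma>2' t\<bar> \<le> s"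
      unfolding \<gamma>2'_def by simp
  qed
  have W0A: "W0 A = 0" unfolding W0_def W_def using gA by simp
  have W0B: "W0 B = d" using tau(3) unfolding W0_def \<Phi>_def by simp
  have W0mono: "W0 x \<le> W0 y" if xy: "A \<le> x" "x \<le> y" "y \<le> B" for x y
  proof (rule DERIV_nonneg_imp_increasing_open[OF xy(2)])
    fix z assume z: "x < z" "z < y"
    then have zAB: "z \<in> {A..B}" "A < z" "z < B" using xy by auto
    have "(W0 has_real_derivative \<psi> \<tau> z * (s - e * \<gamma>' z)) (at z)"
      using W0der[OF zAB(1)] at_within_Icc_at[OF zAB(2,3)] by simp
    moreover have "0 \<le> \<psi> \<tau> z * (s - e * \<gamma>' z)"
      using psi_01 gder_nn[OF zAB(1)] by simp
    ultimately show "\<exists>y. (W0 has_real_derivative y) (at z) \<and> 0 \<le> y" by blast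
  next
    have "continuous_on {A..B} W0" by (rule DERIV_continuous_on[OF W0der])
    then show "continuous_on {x..y} W0" by (rule continuous_on_subset) (use xy in auto)
  qed
  have W0rng: "0 \<le> W0 t" "W0 t \<le> d" if "t \<in> {A..B}" for t
    using W0mono[of A t] W0mono[of t B] that W0A W0B by auto
  have W0lo: "W0 t = 0" if "t \<le> \<tau> - \<delta>0" "A \<le> t" for t
  proof -
    have "integral {A..t} (\<lambda>u. \<psi>' \<tau> u * g u) = integral {A..t} (\<lambda>u. 0)"
      by (rule integral_cong) (use psi_lo that in auto)
    then show ?thesis using psi_lo[OF that(1)] unfolding W0_def W_def by simp
  qed
  define C where "C = integral {A..\<tau>} (\<lambda>u. \<psi>' \<tau> u * g u)"
  have W0hi: "W0 t = g t - C" if "\<tau> \<le> t" "t \<le> B" for t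
  proof -
    have ic: "(\<lambda>u. \<psi>' \<tau> u * g u) integrable_on {A..t}"
      by (rule integrable_continuous_real, rule continuous_on_subset[OF intcont]) (use that in auto)
    have "integral {A..t} (\<lambda>u. \<psi>' \<tau> u * g u) = C + integral {\<tau>..t} (\<lambda>u. \<psi>' \<tau> u * g u)"
      unfolding C_def using Henstock_Kurzweil_Integration.integral_combine[OF tau(1) that(1) ic] by simp
    also have "integral {\<tau>..t} (\<lambda>u. \<psi>' \<tau> u * g u) = integral {\<tau>..t} (\<lambda>u. 0)"
      by (rule integral_cong) (use psi_hi in auto)
    finally show ?thesis using psi_hi[OF that(1)] unfolding W0_def W_def by simp
  qed
  have lin: "\<gamma>2 t = \<gamma>2 \<tau> + e * s * (t - \<tau>)" if "\<tau> \<le> t" "t \<le> B" for t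
  proof -
    have "\<gamma>2 t = \<gamma> t + e * (g t - C)" unfolding \<gamma>2_def using W0hi[OF that] by simp
    moreover have "\<gamma>2 \<tau> = \<gamma> \<tau> + e * (g \<tau> - C)" unfolding \<gamma>2_def using W0hi[of \<tau>] tau d0 by simp
    ultimately show ?thesis using e by (elim disjE) (simp_all add: g_def algebra_simps)
  qed
  have g2B: "\<gamma>2 B = \<gamma> B + e * d" unfolding \<gamma>2_def using W0B by simp
  have g2A: "\<gamma>2 A = \<gamma> A" unfolding \<gamma>2_def using W0A by simp
  have psiB: "\<psi> \<tau> B = 1" using psi_hi[of \<tau> B] tau d0 by auto
  have g2'B: "\<gamma>2' B = e * s" unfolding \<gamma>2'_def psiB using e by (elim disjE) simp_all
  have lowside: "e * \<gamma> t \<le> e * \<gamma>2 t" if "t \<in> {A..B}" for t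
    unfolding \<gamma>2_def using W0rng[OF that] e by (elim disjE) simp_all
  have upside: "e * \<gamma>2 t \<le> e * (\<gamma> B + e * d)" if "t \<in> {A..B}" "\<tau> - \<delta>0 \<le> t" for t
  proof (cases "\<tau> \<le> t")
    case True
    have "\<gamma>2 B = \<gamma>2 \<tau> + e * s * (B - \<tau>)" using lin[of B] tau d0 by auto
    moreover have "\<gamma>2 t = \<gamma>2 \<tau> + e * s * (t - \<tau>)" using lin[of t] True that by auto
    ultimately have "e * \<gamma>2 t = e * \<gamma>2 B - s * (B - t)" using e by (elim disjE) (simp_all add: algebra_simps)
    then show ?thesis using g2B s that by (simp add: mult_nonneg_nonneg)
  next
    case False
    have "\<bar>\<gamma>2 t - \<gamma>2 \<tau>\<bar> \<le> s * \<bar>t - \<tau>\<bar>" using sbp_lip[OF sbp2, of t \<tau>] that tau d0 by auto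
    then have "e * \<gamma>2 t \<le> e * \<gamma>2 \<tau> + s * (\<tau> - t)" using e False by (elim disjE) auto
    moreover have "\<gamma>2 B = \<gamma>2 \<tau> + e * s * (B - \<tau>)" using lin[of B] tau d0 by auto
    then have "e * \<gamma>2 \<tau> = e * \<gamma>2 B - s * (B - \<tau>)" using e by (elim disjE) (simp_all add: algebra_simps)
    moreover have "s * (\<tau> - t) \<le> s * (B - \<tau>)" using s that tau by (intro mult_left_mono) auto
    ultimately have "e * \<gamma>2 t \<le> e * \<gamma>2 B" by linarith
    then show ?thesis using g2B by simp
  qed
  have rng2: "\<gamma>2 ` {A..B} \<subseteq> {0..L}"
  proof
    fix y assume "y \<in> \<gamma>2 ` {A..B}"
    then obtain t where t: "t \<in> {A..B}" "y = \<gamma>2 t" by auto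
    have gt: "\<gamma> t \<in> {0..L}" using rng t(1) by blast
    show "y \<in> {0..L}"
    proof (cases "\<tau> - \<delta>0 \<le> t")
      case True
      show ?thesis using e lowside[OF t(1)] upside[OF t(1) True] gt nu t(2) by (elim disjE) auto
    next
      case False
      then show ?thesis using W0lo[of t] t gt unfolding \<gamma>2_def by auto
    qed
  qed
  define t0 where "t0 = max A (\<tau> - \<delta>0)"
  have t0: "A \<le> t0" "t0 \<le> \<tau>" "\<tau> \<le> B" "\<tau> - t0 \<le> \<delta>" using tau d0 by (auto simp: t0_def)
  let ?f2 = "\<lambda>t. theta \<rho> (h t) (curve_pt Q (\<gamma>2 t))"
  let ?f1 = "\<lambda>t. theta \<rho> (h t) (curve_pt Q (\<gamma> t))"
  have i2: "?f2 integrable_on {A..B}" by (rule pcw_int[OF pc sbp_cont[OF sbp2]])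
  have i1: "?f1 integrable_on {A..B}" by (rule pcw_int[OF pc contg_gamma])
  have i2a: "?f2 integrable_on {t0..B}" by (rule integrable_on_subinterval[OF i2]) (use t0 in auto)
  have i1a: "?f1 integrable_on {t0..B}" by (rule integrable_on_subinterval[OF i1]) (use t0 in auto)
  have s2: "integral {A..B} ?f2 = integral {A..t0} ?f2 + integral {t0..\<tau>} ?f2 + integral {\<tau>..B} ?f2"
    using Henstock_Kurzweil_Integration.integral_combine[of A t0 B ?f2]
      Henstock_Kurzweil_Integration.integral_combine[OF t0(2) t0(3) i2a] t0 i2 by auto
  have s1: "integral {A..B} ?f1 = integral {A..t0} ?f1 + integral {t0..\<tau>} ?f1 + integral {\<tau>..B} ?f1"
    using Henstock_Kurzweil_Integration.integral_combine[of A t0 B ?f1]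
      Henstock_Kurzweil_Integration.integral_combine[OF t0(2) t0(3) i1a] t0 i1 by auto
  have c1: "integral {A..t0} ?f2 = integral {A..t0} ?f1"
  proof (rule integral_cong)
    fix t assume t: "t \<in> {A..t0}"
    have "W0 t = 0"
    proof (cases "t0 = A")
      case True then show ?thesis using t W0A by auto
    next
      case False then have "t \<le> \<tau> - \<delta>0" using t by (auto simp: t0_def)
      then show ?thesis using W0lo t by auto
    qed
    then show "?f2 t = ?f1 t" unfolding \<gamma>2_def by simp
  qed
  have c2: "integral {t0..\<tau>} ?f2 \<le> \<delta>"
  proof -
    have "?f2 integrable_on {t0..\<tau>}" by (rule integrable_on_subinterval[OF i2]) (use t0 in auto)
    then have "integral {t0..\<tau>} ?f2 \<le> integral {t0..\<tau>} (\<lambda>t. 1::real)"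
      by (rule integral_le) (auto simp: theta_01)
    also have "\<dots> = \<tau> - t0" using t0 by simp
    finally show ?thesis using t0 by linarith
  qed
  have c3: "integral {\<tau>..B} ?f2 \<le> integral {\<tau>..B} ?f1 + k * d / s"
  proof -
    have pc': "pcw k (\<lambda>j. max \<tau> (min B (b j))) h \<tau> B" by (rule pcw_clip[OF pc]) (use t0 in auto)
    have "integral {\<tau>..B} (\<lambda>t. theta \<rho> (h t) (curve_pt Q (\<gamma>2 \<tau> + e * s * (t - \<tau>))))
        \<le> integral {\<tau>..B} ?f1 + k * d / s"
    proof (rule tail_est[OF pc' sbp_sub[OF p] s e])
      fix t assume t: "t \<in> {\<tau>..B}"
      have l: "\<gamma>2 t = \<gamma>2 \<tau> + e * s * (t - \<tau>)" using t by (intro lin) auto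
      have "\<gamma>2 \<tau> + e * s * (t - \<tau>) = \<gamma> t + e * W0 t" using l unfolding \<gamma>2_def by simp
      moreover have "0 \<le> W0 t" "W0 t \<le> d" using W0rng[of t] t t0 by auto
      ultimately show "\<gamma>2 \<tau> + e * s * (t - \<tau>) = \<gamma> t + e * W0 t \<and> 0 \<le> W0 t \<and> W0 t \<le> d" by simp
    qed (use t0 in auto)
    moreover have "integral {\<tau>..B} (\<lambda>t. theta \<rho> (h t) (curve_pt Q (\<gamma>2 \<tau> + e * s * (t - \<tau>)))) = integral {\<tau>..B} ?f2"
    proof (rule integral_cong)
      fix t assume t: "t \<in> {\<tau>..B}"
      have "\<gamma>2 t = \<gamma>2 \<tau> + e * s * (t - \<tau>)" using t by (intro lin) auto
      then show "theta \<rho> (h t) (curve_pt Q (\<gamma>2 \<tau> + e * s * (t - \<tau>))) = ?f2 t" by simp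
    qed
    ultimately show ?thesis by simp
  qed
  have c4: "0 \<le> integral {t0..\<tau>} ?f1"
  proof (rule integral_nonneg)
    show "?f1 integrable_on {t0..\<tau>}" by (rule integrable_on_subinterval[OF i1]) (use t0 in auto)
  qed (auto simp: theta_01)
  have "integral {A..B} ?f2 \<le> integral {A..B} ?f1 + \<delta> + k * d / s"
    using s1 s2 c1 c2 c3 c4 by linarith
  then show ?thesis using sbp2 rng2 g2A g2B g2'B by blast
qed
  

lemma deriv_outside:
  fixes f :: "real \<Rightarrow> real"
  assumes "closed S" "t \<notin> S"
  shows "(f has_real_derivative D) (at t within S)"
proof -
  have "\<not> t islimpt S" using assms closed_limpt by blast
  then have "at t within S = bot" using trivial_limit_within by blast
  then show ?thesis by simp
qed

lemma glue:
  assumes AM: "A \<le> M" and MB: "M \<le> B" and p: "sbp s A M p p'" and q: "sbp s M B q q'"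
    and pq: "p M = q M" and pq': "p' M = q' M"
  shows "sbp s A B (\<lambda>t. if t \<le> M then p t else q t) (\<lambda>t. if t \<le> M then p' t else q' t)"
  unfolding sbp_def
proof
  fix t assume t: "t \<in> {A..B}"
  let ?r = "\<lambda>t. if t \<le> M then p t else q t"
  let ?r' = "\<lambda>t. if t \<le> M then p' t else q' t"
  have d1: "(?r has_real_derivative ?r' t) (at t within {A..M})"
  proof (cases "t \<le> M")
    case True
    have "(p has_real_derivative p' t) (at t within {A..M})" using p t True unfolding sbp_def by auto
    then have "(?r has_real_derivative p' t) (at t within {A..M})"
      by (rule has_field_derivative_transform_within[where d=1]) (use t True in auto)
    then show ?thesis using True by simp
  next
    case False
    then show ?thesis by (intro deriv_outside) auto
  qed
  have d2: "(?r has_real_derivative ?r' t) (at t within {M..B})"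
  proof (cases "M \<le> t")
    case True
    have "(q has_real_derivative q' t) (at t within {M..B})" using q t True unfolding sbp_def by auto
    then have "(?r has_real_derivative q' t) (at t within {M..B})"
      by (rule has_field_derivative_transform_within[where d=1]) (use t True pq in auto)
    moreover have "?r' t = q' t" using True pq' by auto
    ultimately show ?thesis by simp
  next
    case False
    then show ?thesis by (intro deriv_outside) auto
  qed
  have "{A..B} = {A..M} \<union> {M..B}" using AM MB by auto
  then have "(?r has_real_derivative ?r' t) (at t within {A..B})" using DERIV_Un[OF d1 d2] by simp
  moreover have "\<bar>?r' t\<bar> \<le> s" using p q t unfolding sbp_def by auto
  ultimately show "(?r has_real_derivative ?r' t) (at t within {A..B}) \<and> \<bar>?r' t\<bar> \<le> s" by simp
qed

lemma reflect_sbp: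
  assumes q: "sbp s M B q q'"
  shows "sbp s M B (\<lambda>t. q (M + B - t)) (\<lambda>t. - q' (M + B - t))"
  unfolding sbp_def
proof
  fix t assume t: "t \<in> {M..B}"
  have im: "(\<lambda>t. M + B - t) ` {M..B} = {M..B}"
  proof
    show "(\<lambda>t. M + B - t) ` {M..B} \<subseteq> {M..B}" by auto
    show "{M..B} \<subseteq> (\<lambda>t. M + B - t) ` {M..B}"
    proof
      fix x assume "x \<in> {M..B}"
      then show "x \<in> (\<lambda>t. M + B - t) ` {M..B}" by (intro image_eqI[of _ _ "M + B - x"]) auto
    qed
  qed
  have "(q has_real_derivative q' (M + B - t)) (at (M + B - t) within {M..B})"
    using q t unfolding sbp_def by auto
  then have dq: "(q has_real_derivative q' (M + B - t)) (at ((\<lambda>t. M + B - t) t) within (\<lambda>t. M + B - t) ` {M..B})"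
    using im by simp
  have dr: "((\<lambda>t. M + B - t) has_real_derivative -1) (at t within {M..B})"
    by (auto intro!: derivative_eq_intros)
  have "((q \<circ> (\<lambda>t. M + B - t)) has_real_derivative q' (M + B - t) * -1) (at t within {M..B})"
    by (rule DERIV_image_chain[OF dq dr])
  then show "((\<lambda>t. q (M + B - t)) has_real_derivative - q' (M + B - t)) (at t within {M..B}) \<and> \<bar>- q' (M + B - t)\<bar> \<le> s"
    using q t unfolding sbp_def by (auto simp: o_def)
qed

lemma reflect_cost:
  fixes q :: "real \<Rightarrow> real" and h :: "real \<Rightarrow> 'a::real_normed_vector"
  assumes MB: "M \<le> B" and hw: "\<And>t. t \<in> {M<..<B} \<Longrightarrow> h t = w" and cq: "continuous_on {M..B} q"
  shows "integral {M..B} (\<lambda>t. theta \<rho> (h t) (curve_pt Q (q (M + B - t))))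
       = integral {M..B} (\<lambda>t. theta \<rho> (h t) (curve_pt Q (q t)))"
proof -
  let ?r = "\<lambda>t::real. M + B - t"
  have cr: "continuous_on {M..B} (\<lambda>t. q (M + B - t))"
    by (rule continuous_on_compose2[OF cq]) (auto intro!: continuous_intros)
  let ?S = "{t\<in>{M..B}. q t \<in> Bad \<rho> w Q}"
  let ?Sr = "{t\<in>{M..B}. q (M + B - t) \<in> Bad \<rho> w Q}"
  have S: "?S \<in> lmeasurable" using piece(1)[OF MB hw cq] by simp
  have Sr: "?Sr \<in> lmeasurable" using piece(1)[OF MB hw cr] by simp
  have e1: "?Sr = ?r ` ?S"
  proof
    show "?Sr \<subseteq> ?r ` ?S"
    proof
      fix t assume "t \<in> ?Sr" then show "t \<in> ?r ` ?S" by (intro image_eqI[of _ _ "M + B - t"]) auto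
    qed
  qed auto
  have e2: "?S = ?r ` ?Sr"
  proof
    show "?S \<subseteq> ?r ` ?Sr"
    proof
      fix t assume "t \<in> ?S" then show "t \<in> ?r ` ?Sr" by (intro image_eqI[of _ _ "M + B - t"]) auto
    qed
  qed auto
  have der: "(?r has_real_derivative -1) (at x within X)" for x X
    by (auto intro!: derivative_eq_intros)
  have m1: "measure lebesgue (?r ` ?S) \<le> 1 * measure lebesgue ?S"
    using image_measure_bound[OF S der, of 1] by auto
  have m2: "measure lebesgue (?r ` ?Sr) \<le> 1 * measure lebesgue ?Sr"
    using image_measure_bound[OF Sr der, of 1] by auto
  have "measure lebesgue ?Sr = measure lebesgue ?S" using m1 m2 e1 e2 by simp
  then show ?thesis using piece(3)[OF MB hw cq] piece(3)[OF MB hw cr] by simp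
qed

lemma tight_linear:
  assumes p: "sbp s a b \<gamma> \<gamma>'" and ab: "a \<le> b" and e: "e = 1 \<or> e = -1"
    and tight: "e * (\<gamma> b - \<gamma> a) = s * (b - a)"
  shows "\<And>t. t \<in> {a..b} \<Longrightarrow> \<gamma> t = \<gamma> a + e * s * (t - a)"
proof -
  fix t assume t: "t \<in> {a..b}"
  have l1: "\<bar>\<gamma> t - \<gamma> a\<bar> \<le> s * \<bar>t - a\<bar>" using sbp_lip[OF p t] ab by auto
  have l2: "\<bar>\<gamma> b - \<gamma> t\<bar> \<le> s * \<bar>b - t\<bar>" using sbp_lip[OF p _ t] ab by auto
  have "e * (\<gamma> t - \<gamma> a) \<le> s * (t - a)" using l1 t e by auto
  moreover have "e * (\<gamma> b - \<gamma> t) \<le> s * (b - t)" using l2 t e by auto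
  ultimately have "e * (\<gamma> t - \<gamma> a) = s * (t - a)" using tight by (simp add: algebra_simps)
  then show "\<gamma> t = \<gamma> a + e * s * (t - a)" using e by (elim disjE) (auto simp: algebra_simps)
qed

lemma pcw1: assumes "\<And>t. t \<in> {A<..<B} \<Longrightarrow> h t = w" "A \<le> B"
  shows "pcw 1 (\<lambda>j. if j = 0 then A else B) h A B"
  unfolding pcw_def using assms by auto

lemma glue_cost:
  fixes p q :: "real \<Rightarrow> real" and h :: "real \<Rightarrow> 'a::real_normed_vector"
  assumes AM: "A \<le> M" and MB: "M \<le> B" and hw: "\<And>t. t \<in> {A<..<B} \<Longrightarrow> h t = w"
    and r: "\<And>t. t \<in> {A..M} \<Longrightarrow> r t = p t" "\<And>t. t \<in> {M..B} \<Longrightarrow> r t = q t"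
    and cr: "continuous_on {A..B} r"
  shows "integral {A..B} (\<lambda>t. theta \<rho> (h t) (curve_pt Q (r t)))
       = integral {A..M} (\<lambda>t. theta \<rho> (h t) (curve_pt Q (p t))) + integral {M..B} (\<lambda>t. theta \<rho> (h t) (curve_pt Q (q t)))"
proof -
  have pc: "pcw 1 (\<lambda>j. if j = 0 then A else B) h A B" by (rule pcw1[where w=w]) (use hw AM MB in auto)
  have i: "(\<lambda>t. theta \<rho> (h t) (curve_pt Q (r t))) integrable_on {A..B}" by (rule pcw_int[OF pc cr])
  have "integral {A..B} (\<lambda>t. theta \<rho> (h t) (curve_pt Q (r t)))
     = integral {A..M} (\<lambda>t. theta \<rho> (h t) (curve_pt Q (r t))) + integral {M..B} (\<lambda>t. theta \<rho> (h t) (curve_pt Q (r t)))"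
    using Henstock_Kurzweil_Integration.integral_combine[OF AM MB i] by simp
  also have "integral {A..M} (\<lambda>t. theta \<rho> (h t) (curve_pt Q (r t))) = integral {A..M} (\<lambda>t. theta \<rho> (h t) (curve_pt Q (p t)))"
    by (rule integral_cong) (use r in auto)
  also have "integral {M..B} (\<lambda>t. theta \<rho> (h t) (curve_pt Q (r t))) = integral {M..B} (\<lambda>t. theta \<rho> (h t) (curve_pt Q (q t)))"
    by (rule integral_cong) (use r in auto)
  finally show ?thesis .
qed

lemma junction:
  fixes p q p' q' :: "real \<Rightarrow> real" and h :: "real \<Rightarrow> 'a::real_normed_vector"
  assumes AM: "A \<le> M" and MB: "M \<le> B" and hw: "\<And>t. t \<in> {A<..<B} \<Longrightarrow> h t = w"
    and pp: "sbp s A M p p'" and prng: "p ` {A..M} \<subseteq> {0..L}"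
    and qq: "sbp s M B q q'" and qrng: "q ` {M..B} \<subseteq> {0..L}"
    and pq: "p M = q M" and eps: "0 < \<epsilon>"
  shows "\<exists>r r'. sbp s A B r r' \<and> r ` {A..B} \<subseteq> {0..L} \<and> r A = p A \<and> r B = q B \<and>
     integral {A..B} (\<lambda>t. theta \<rho> (h t) (curve_pt Q (r t)))
       \<le> integral {A..M} (\<lambda>t. theta \<rho> (h t) (curve_pt Q (p t))) + integral {M..B} (\<lambda>t. theta \<rho> (h t) (curve_pt Q (q t))) + \<epsilon>"
proof -
  let ?I = "\<lambda>a b (f::real\<Rightarrow>real). integral {a..b} (\<lambda>t. theta \<rho> (h t) (curve_pt Q (f t)))"
  define c where "c = p M"
  define \<alpha> where "\<alpha> = p A"
  define \<beta> where "\<beta> = q B"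
  have direct: ?thesis if "p' M = q' M"
  proof -
    let ?r = "\<lambda>t. if t \<le> M then p t else q t"
    have sr: "sbp s A B ?r (\<lambda>t. if t \<le> M then p' t else q' t)" by (rule glue[OF AM MB pp qq pq that])
    have rr: "?r ` {A..B} \<subseteq> {0..L}" using prng qrng by auto
    have "?I A B ?r = ?I A M p + ?I M B q"
      by (rule glue_cost[OF AM MB hw _ _ sbp_cont[OF sr]]) (use pq in auto)
    then show ?thesis using sr rr eps AM MB pq
      by (intro exI[of _ ?r] exI[of _ "\<lambda>t. if t \<le> M then p' t else q' t"]) auto
  qed
  have linear: ?thesis if k: "\<bar>\<kappa>\<bar> \<le> s" "\<And>t. t \<in> {A..M} \<Longrightarrow> p t = c + \<kappa> * (t - M)"
      "\<And>t. t \<in> {M..B} \<Longrightarrow> q t = c + \<kappa> * (t - M)" for \<kappa>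
  proof -
    let ?r = "\<lambda>t. c + \<kappa> * (t - M)"
    have sr: "sbp s A B ?r (\<lambda>t. \<kappa>)" unfolding sbp_def using k(1) by (auto intro!: derivative_eq_intros)
    have rr: "?r ` {A..B} \<subseteq> {0..L}"
    proof
      fix y assume "y \<in> ?r ` {A..B}"
      then obtain t where t: "t \<in> {A..B}" "y = ?r t" by auto
      show "y \<in> {0..L}"
      proof (cases "t \<le> M")
        case True
        then have tt: "t \<in> {A..M}" using t by auto
        then have "p t \<in> {0..L}" using prng by blast
        then show ?thesis using k(2)[OF tt] t by simp
      next
        case False
        then have tt: "t \<in> {M..B}" using t by auto
        then have "q t \<in> {0..L}" using qrng by blast
        then show ?thesis using k(3)[OF tt] t by simp
      qed
    qed
    have "?I A B ?r = ?I A M p + ?I M B q"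
      by (rule glue_cost[OF AM MB hw _ _ sbp_cont[OF sr]]) (use k in auto)
    moreover have "?r A = p A" using k(2)[of A] AM by auto
    moreover have "?r B = q B" using k(3)[of B] MB by auto
    ultimately show ?thesis using sr rr eps by (intro exI[of _ ?r] exI[of _ "\<lambda>t. \<kappa>"]) auto
  qed
  show ?thesis
  proof (cases "p' M = q' M \<or> A = M \<or> M = B")
    case True
    then consider "p' M = q' M" | "A = M" | "M = B" by blast
    then show ?thesis
    proof cases
      case 1 then show ?thesis by (rule direct)
    next
      case 2
      have "?I A M p = 0" using 2 by simp
      then show ?thesis using qq qrng eps pq 2 by (intro exI[of _ q] exI[of _ q']) auto
    next
      case 3
      have "?I M B q = 0" using 3 by simp
      then show ?thesis using pp prng eps pq 3 by (intro exI[of _ p] exI[of _ p']) auto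
    qed
  next
    case False
    then have neq: "p' M \<noteq> q' M" and AltM: "A < M" and MltB: "M < B" using AM MB by auto
    have s: "0 < s"
    proof -
      have "\<bar>p' M\<bar> \<le> s" "\<bar>q' M\<bar> \<le> s" using pp qq AM MB unfolding sbp_def by auto
      then show ?thesis using neq by auto
    qed
    have cL: "0 \<le> c" "c \<le> L" using prng AM unfolding c_def by (auto simp: image_subset_iff)
    have aL: "0 \<le> \<alpha>" "\<alpha> \<le> L" using prng AM unfolding \<alpha>_def by (auto simp: image_subset_iff)
    have bL: "0 \<le> \<beta>" "\<beta> \<le> L" using qrng MB unfolding \<beta>_def by (auto simp: image_subset_iff)
    have lipp: "\<bar>c - \<alpha>\<bar> \<le> s * (M - A)" using sbp_lip[OF pp, of M A] AM unfolding c_def \<alpha>_def by auto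
    have lipq: "\<bar>c - \<beta>\<bar> \<le> s * (B - M)" using sbp_lip[OF qq, of M B] MB pq unfolding c_def \<beta>_def by auto
    define ok where "ok e \<longleftrightarrow> (if e = 1 then c < L else 0 < c) \<and> e * (c - \<alpha>) < s * (M - A) \<and> e * (c - \<beta>) < s * (B - M)" for e :: real
    show ?thesis
    proof (cases "ok 1 \<or> ok (-1)")
      case False
      then have n1: "c = L \<or> c - \<alpha> = s * (M - A) \<or> c - \<beta> = s * (B - M)"
        and n2: "c = 0 \<or> \<alpha> - c = s * (M - A) \<or> \<beta> - c = s * (B - M)"
        using cL lipp lipq unfolding ok_def by auto
      have pos1: "0 < s * (M - A)" "0 < s * (B - M)" using s AltM MltB by auto
      consider (up) "c - \<alpha> = s * (M - A)" "\<beta> - c = s * (B - M)"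
        | (dn) "\<alpha> - c = s * (M - A)" "c - \<beta> = s * (B - M)"
        | (zero) "c = 0" "L = 0"
        using n1 n2 aL bL cL pos1 by linarith
      then show ?thesis
      proof cases
        case up
        show ?thesis
        proof (rule linear[of s])
          fix t assume t: "t \<in> {A..M}"
          have "p t = p A + 1 * s * (t - A)"
            by (rule tight_linear[OF pp AM _ _ t]) (use up in \<open>auto simp: c_def \<alpha>_def\<close>)
          then show "p t = c + s * (t - M)" using up(1) unfolding \<alpha>_def by (simp add: algebra_simps)
        next
          fix t assume t: "t \<in> {M..B}"
          have "q t = q M + 1 * s * (t - M)"
            by (rule tight_linear[OF qq MB _ _ t]) (use up pq in \<open>auto simp: c_def \<beta>_def\<close>)
          then show "q t = c + s * (t - M)" using pq unfolding c_def by (simp add: algebra_simps)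
        qed (use s in auto)
      next
        case dn
        show ?thesis
        proof (rule linear[of "-s"])
          fix t assume t: "t \<in> {A..M}"
          have "p t = p A + (-1) * s * (t - A)"
            by (rule tight_linear[OF pp AM _ _ t]) (use dn in \<open>auto simp: c_def \<alpha>_def algebra_simps\<close>)
          then show "p t = c + - s * (t - M)" using dn(1) unfolding \<alpha>_def by (simp add: algebra_simps)
        next
          fix t assume t: "t \<in> {M..B}"
          have "q t = q M + (-1) * s * (t - M)"
            by (rule tight_linear[OF qq MB _ _ t]) (use dn pq in \<open>auto simp: c_def \<beta>_def algebra_simps\<close>)
          then show "q t = c + - s * (t - M)" using pq unfolding c_def by (simp add: algebra_simps)
        qed (use s in auto)
      next
        case zero
        show ?thesis
        proof (rule linear[of 0])
          fix t assume t: "t \<in> {A..M}"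
          then have "p t \<in> {0..L}" using prng by blast
          then show "p t = c + 0 * (t - M)" using zero by simp
        next
          fix t assume t: "t \<in> {M..B}"
          then have "q t \<in> {0..L}" using qrng by blast
          then show "q t = c + 0 * (t - M)" using zero by simp
        qed (use s in auto)
      qed
    next
      case True
      then obtain e where e: "e = 1 \<or> e = -1" and oke: "ok e" by blast
      have ee: "e * e = 1" using e by auto
      define \<sigma> where "\<sigma> = min (if e = 1 then L - c else c) (min (s * (M - A) - e * (c - \<alpha>)) (s * (B - M) - e * (c - \<beta>)))"
      have sig: "0 < \<sigma>" using oke e unfolding \<sigma>_def ok_def by auto
      have sig1: "\<sigma> \<le> (if e = 1 then L - c else c)" "\<sigma> \<le> s * (M - A) - e * (c - \<alpha>)" "\<sigma> \<le> s * (B - M) - e * (c - \<beta>)"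
        unfolding \<sigma>_def by (meson min.cobounded1 min.cobounded2 order_trans)+
      define \<eta> where "\<eta> = min (\<sigma> / 3) (s * \<epsilon> / 12)"
      have eta: "0 < \<eta>" "3 * \<eta> \<le> \<sigma>" "12 * \<eta> \<le> s * \<epsilon>"
      proof -
        have "\<eta> \<le> \<sigma> / 3" "\<eta> \<le> s * \<epsilon> / 12" unfolding \<eta>_def by auto
        moreover have "0 < \<eta>" using sig s eps unfolding \<eta>_def by auto
        ultimately show "0 < \<eta>" "3 * \<eta> \<le> \<sigma>" "12 * \<eta> \<le> s * \<epsilon>" by auto
      qed
      define \<delta> where "\<delta> = \<epsilon> / 6"
      have del: "0 < \<delta>" using eps unfolding \<delta>_def by auto
      have hA: "\<And>t. t \<in> {A<..<M} \<Longrightarrow> h t = w" using hw MB by auto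
      have hB: "\<And>t. t \<in> {M<..<B} \<Longrightarrow> h t = w" using hw AM by auto
      have pcA: "pcw 1 (\<lambda>j. if j = 0 then A else M) h A M" by (rule pcw1[where w=w]) (use hA AM in auto)
      have pcB: "pcw 1 (\<lambda>j. if j = 0 then M else B) h M B" by (rule pcw1[where w=w]) (use hB MB in auto)
      have rngs: "c + e * (2 * \<eta>) \<in> {0..L}" "c + e * \<eta> \<in> {0..L}"
        using e sig1(1) eta cL by (elim disjE; auto)+
      have nu1: "p M + e * (2 * \<eta>) \<in> {0..L}" using rngs unfolding c_def by simp
      have feas1: "e * (p M + e * (2 * \<eta>) - p A) \<le> s * (M - A)"
      proof -
        have "e * (p M + e * (2 * \<eta>) - p A) = e * (c - \<alpha>) + 2 * \<eta>"
          unfolding c_def \<alpha>_def using e by (elim disjE) (auto simp: algebra_simps)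
        then show ?thesis using sig1(2) eta by linarith
      qed
      obtain p1 p1' where P1: "sbp s A M p1 p1'" "p1 ` {A..M} \<subseteq> {0..L}" "p1 A = p A"
          "p1 M = p M + e * (2 * \<eta>)" "?I A M p1 \<le> ?I A M p + \<delta> + real 1 * (2 * \<eta>) / s"
      proof -
        have "0 < 2 * \<eta>" using eta by simp
        from end_mod[OF AM s pp prng e this nu1 feas1 del pcA, where \<rho>=\<rho> and Q=Q] show ?thesis using that by auto
      qed
      have e2: "-e = 1 \<or> -e = -1" using e by auto
      have nu2: "p1 M + (-e) * \<eta> \<in> {0..L}" using rngs P1(4) unfolding c_def by (simp add: algebra_simps)
      have feas2: "(-e) * (p1 M + (-e) * \<eta> - p1 A) \<le> s * (M - A)"
      proof -
        have "(-e) * (p1 M + (-e) * \<eta> - p1 A) = - (e * (c - \<alpha>)) - \<eta>"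
          unfolding P1(3) P1(4) c_def \<alpha>_def using e by (elim disjE) (auto simp: algebra_simps)
        moreover have "- (e * (c - \<alpha>)) \<le> s * (M - A)" using lipp e by auto
        ultimately show ?thesis using eta by linarith
      qed
      obtain p2 p2' where P2: "sbp s A M p2 p2'" "p2 ` {A..M} \<subseteq> {0..L}" "p2 A = p1 A"
          "p2 M = p1 M + (-e) * \<eta>" "p2' M = (-e) * s" "?I A M p2 \<le> ?I A M p1 + \<delta> + real 1 * \<eta> / s"
        using end_mod[OF AM s P1(1) P1(2) e2 eta(1) nu2 feas2 del pcA, where \<rho>=\<rho> and Q=Q] by auto
      define qr where "qr t = q (M + B - t)" for t
      define qr' where "qr' t = - q' (M + B - t)" for t
      have sqr: "sbp s M B qr qr'" unfolding qr_def qr'_def by (rule reflect_sbp[OF qq])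
      have qrrng: "qr ` {M..B} \<subseteq> {0..L}"
      proof
        fix y assume "y \<in> qr ` {M..B}"
        then obtain t where t: "t \<in> {M..B}" "y = q (M + B - t)" unfolding qr_def by auto
        have "M + B - t \<in> {M..B}" using t by auto
        then show "y \<in> {0..L}" using qrng t by blast
      qed
      have qrM: "qr M = \<beta>" and qrB: "qr B = c" unfolding qr_def \<beta>_def c_def using pq by auto
      have nu3: "qr B + e * \<eta> \<in> {0..L}" using rngs qrB by simp
      have feas3: "e * (qr B + e * \<eta> - qr M) \<le> s * (B - M)"
      proof -
        have "e * (qr B + e * \<eta> - qr M) = e * (c - \<beta>) + \<eta>"
          unfolding qrM qrB using e by (elim disjE) (auto simp: algebra_simps)
        then show ?thesis using sig1(3) eta by linarith
      qed
      obtain q3 q3' where P3: "sbp s M B q3 q3'" "q3 ` {M..B} \<subseteq> {0..L}" "q3 M = qr M"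
          "q3 B = qr B + e * \<eta>" "q3' B = e * s" "?I M B q3 \<le> ?I M B qr + \<delta> + real 1 * \<eta> / s"
        using end_mod[OF MB s sqr qrrng e eta(1) nu3 feas3 del pcB, where \<rho>=\<rho> and Q=Q] by auto
      have cqr: "?I M B qr = ?I M B q"
        unfolding qr_def by (rule reflect_cost[OF MB hB sbp_cont[OF qq]])
      define q4 where "q4 t = q3 (M + B - t)" for t
      define q4' where "q4' t = - q3' (M + B - t)" for t
      have sq4: "sbp s M B q4 q4'" unfolding q4_def q4'_def by (rule reflect_sbp[OF P3(1)])
      have q4rng: "q4 ` {M..B} \<subseteq> {0..L}"
      proof
        fix y assume "y \<in> q4 ` {M..B}"
        then obtain t where t: "t \<in> {M..B}" "y = q3 (M + B - t)" unfolding q4_def by auto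
        have "M + B - t \<in> {M..B}" using t by auto
        then show "y \<in> {0..L}" using P3(2) t by blast
      qed
      have cq4: "?I M B q4 = ?I M B q3"
        unfolding q4_def by (rule reflect_cost[OF MB hB sbp_cont[OF P3(1)]])
      have q4M: "q4 M = c + e * \<eta>" unfolding q4_def using P3(4) qrB by simp
      have q4B: "q4 B = \<beta>" unfolding q4_def using P3(3) qrM by simp
      have q4'M: "q4' M = - e * s" unfolding q4'_def using P3(5) by simp
      have p2M: "p2 M = c + e * \<eta>" using P2(4) P1(4) unfolding c_def by (simp add: algebra_simps)
      have p2A: "p2 A = \<alpha>" using P2(3) P1(3) unfolding \<alpha>_def by simp
      let ?r = "\<lambda>t. if t \<le> M then p2 t else q4 t"
      let ?r' = "\<lambda>t. if t \<le> M then p2' t else q4' t"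
      have sr: "sbp s A B ?r ?r'" by (rule glue[OF AM MB P2(1) sq4]) (use p2M q4M P2(5) q4'M in auto)
      have rr: "?r ` {A..B} \<subseteq> {0..L}" using P2(2) q4rng by auto
      have cr: "?I A B ?r = ?I A M p2 + ?I M B q4"
        by (rule glue_cost[OF AM MB hw _ _ sbp_cont[OF sr]]) (use p2M q4M in auto)
      have X: "?I A B ?r \<le> ?I A M p + ?I M B q + 3 * \<delta> + 4 * \<eta> / s"
        using cr P2(6) P1(5) cq4 P3(6) cqr by (simp add: add_divide_distrib)
      have Y: "3 * \<delta> + 4 * \<eta> / s \<le> \<epsilon>"
      proof -
        have "4 * \<eta> / s \<le> \<epsilon> / 3" using eta s by (simp add: divide_simps mult.commute)
        then show ?thesis unfolding \<delta>_def using eps by linarith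
      qed
      have "?I A B ?r \<le> ?I A M p + ?I M B q + \<epsilon>" using X Y by linarith
      moreover have "?r A = p A" using p2A AM unfolding \<alpha>_def by simp
      moreover have "?r B = q B" using q4B AltM MltB unfolding \<beta>_def by simp
      ultimately show ?thesis using sr rr by blast
    qed
  qed
qed

definition fI :: "real \<Rightarrow> real \<Rightarrow> (real \<Rightarrow> 'a::real_normed_vector) \<Rightarrow> 'a list \<Rightarrow> real \<Rightarrow> real \<Rightarrow> real \<Rightarrow> real \<Rightarrow> ereal" where
  "fI \<rho> s h Q a b x y = (INF \<gamma>\<in>dog_paths Q s a b x y. ereal (cost \<rho> h Q a b \<gamma>))"

lemma F_fI: "F_cost \<rho> s h P Q j lam = fI \<rho> s h Q 0 (vx P j) 0 lam"
  unfolding F_cost_def fI_def by simp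

lemma f_fI: "f_cost \<rho> s h P Q i a b = fI \<rho> s h Q (vx P (i - 1)) (vx P i) a b"
  unfolding f_cost_def fI_def by simp

lemma dog_paths_iff: "\<gamma> \<in> dog_paths Q s a b x y \<longleftrightarrow>
   (\<exists>\<gamma>'. sbp s a b \<gamma> \<gamma>') \<and> \<gamma> ` {a..b} \<subseteq> {0..curve_len Q} \<and> \<gamma> a = x \<and> \<gamma> b = y"
  unfolding dog_paths_def speed_bounded_def sbp_def by auto

lemma cost_nonneg: "0 \<le> cost \<rho> h Q a b \<gamma>"
  unfolding cost_def
proof (cases "(\<lambda>t. theta \<rho> (h t) (curve_pt Q (\<gamma> t))) integrable_on {a..b}")
  case True then show "0 \<le> integral {a..b} (\<lambda>t. theta \<rho> (h t) (curve_pt Q (\<gamma> t)))"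
    by (rule integral_nonneg) (simp add: theta_01)
next
  case False then show "0 \<le> integral {a..b} (\<lambda>t. theta \<rho> (h t) (curve_pt Q (\<gamma> t)))"
    by (simp add: not_integrable_integral)
qed

lemma fI_nonneg: "0 \<le> fI \<rho> s h Q a b x y"
  unfolding fI_def by (rule INF_greatest) (simp add: cost_nonneg)

lemma fI_le: "\<gamma> \<in> dog_paths Q s a b x y \<Longrightarrow> fI \<rho> s h Q a b x y \<le> ereal (cost \<rho> h Q a b \<gamma>)"
  unfolding fI_def by (rule INF_lower)

lemma fI_empty: "dog_paths Q s a b x y = {} \<Longrightarrow> fI \<rho> s h Q a b x y = \<infinity>"
  unfolding fI_def by (simp add: top_ereal_def)

lemma fI_finite: "dog_paths Q s a b x y \<noteq> {} \<Longrightarrow> fI \<rho> s h Q a b x y < \<infinity>"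
proof -
  assume "dog_paths Q s a b x y \<noteq> {}"
  then obtain \<gamma> where "\<gamma> \<in> dog_paths Q s a b x y" by auto
  then have "fI \<rho> s h Q a b x y \<le> ereal (cost \<rho> h Q a b \<gamma>)" by (rule fI_le)
  moreover have "ereal (cost \<rho> h Q a b \<gamma>) < \<infinity>" by simp
  ultimately show ?thesis by (rule le_less_trans)
qed

lemma fI_finite_iff: "fI \<rho> s h Q a b x y < \<infinity> \<longleftrightarrow> dog_paths Q s a b x y \<noteq> {}"
  using fI_finite fI_empty by fastforce

lemma fI_approx:
  assumes "fI \<rho> s h Q a b x y = ereal r" "0 < \<epsilon>"
  shows "\<exists>\<gamma>\<in>dog_paths Q s a b x y. cost \<rho> h Q a b \<gamma> < r + \<epsilon>"
proof -
  have "fI \<rho> s h Q a b x y < ereal (r + \<epsilon>)" using assms by simp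
  then show ?thesis unfolding fI_def by (auto simp: INF_less_iff)
qed

lemma INF_perturb:
  fixes c :: real
  assumes "\<And>x \<delta>. x \<in> S2 \<Longrightarrow> 0 < \<delta> \<Longrightarrow> \<exists>y\<in>S1. g1 y \<le> g2 x + \<delta> + c"
    and nn: "\<And>x. x \<in> S2 \<Longrightarrow> 0 \<le> g2 x"
  shows "(INF y\<in>S1. ereal (g1 y)) \<le> (INF x\<in>S2. ereal (g2 x)) + ereal c"
proof (cases "S2 = {}")
  case True then show ?thesis by (simp add: top_ereal_def)
next
  case False
  have "(INF y\<in>S1. ereal (g1 y)) \<le> ereal (g2 x) + ereal c" if x: "x \<in> S2" for x
  proof (rule ereal_le_epsilon2)
    fix e :: real assume e: "0 < e"
    obtain y where y: "y \<in> S1" "g1 y \<le> g2 x + e + c" using assms(1)[OF x e] by auto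
    have "(INF y\<in>S1. ereal (g1 y)) \<le> ereal (g1 y)" using y(1) by (rule INF_lower)
    also have "\<dots> \<le> ereal (g2 x) + ereal c + ereal e" using y(2) by simp
    finally show "(INF y\<in>S1. ereal (g1 y)) \<le> ereal (g2 x) + ereal c + ereal e" .
  qed
  then have "(INF y\<in>S1. ereal (g1 y)) \<le> (INF x\<in>S2. ereal (g2 x) + ereal c)"
    by (rule INF_greatest)
  also have "\<dots> = (INF x\<in>S2. ereal (g2 x)) + ereal c"
    by (rule INF_ereal_add_left) (use False nn in auto)
  finally show ?thesis .
qed

lemma paths_nonempty_iff:
  assumes ab: "a \<le> b"
  shows "dog_paths Q s a b x y \<noteq> {} \<longleftrightarrow>
    0 \<le> s \<and> x \<in> {0..curve_len Q} \<and> y \<in> {0..curve_len Q} \<and> \<bar>y - x\<bar> \<le> s * (b - a)"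
proof
  assume "dog_paths Q s a b x y \<noteq> {}"
  then obtain \<gamma>0 where "\<gamma>0 \<in> dog_paths Q s a b x y" by blast
  then obtain \<gamma> \<gamma>' where g: "sbp s a b \<gamma> \<gamma>'" "\<gamma> ` {a..b} \<subseteq> {0..curve_len Q}" "\<gamma> a = x" "\<gamma> b = y"
    unfolding dog_paths_iff by blast
  have "\<bar>\<gamma>' a\<bar> \<le> s" using g(1) ab unfolding sbp_def by auto
  then have "0 \<le> s" by auto
  moreover have "x \<in> {0..curve_len Q}" "y \<in> {0..curve_len Q}" using g ab by (auto simp: image_subset_iff)
  moreover have "\<bar>y - x\<bar> \<le> s * (b - a)" using sbp_lip[OF g(1), of b a] g ab by auto
  ultimately show "0 \<le> s \<and> x \<in> {0..curve_len Q} \<and> y \<in> {0..curve_len Q} \<and> \<bar>y - x\<bar> \<le> s * (b - a)" by auto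
next
  assume H: "0 \<le> s \<and> x \<in> {0..curve_len Q} \<and> y \<in> {0..curve_len Q} \<and> \<bar>y - x\<bar> \<le> s * (b - a)"
  show "dog_paths Q s a b x y \<noteq> {}"
  proof (cases "a = b")
    case True
    then have xy: "x = y" using H by auto
    have "sbp s a b (\<lambda>t. x) (\<lambda>t. 0)" unfolding sbp_def using H by auto
    then have "(\<lambda>t. x) \<in> dog_paths Q s a b x y" unfolding dog_paths_iff using H xy by auto
    then show ?thesis by auto
  next
    case False
    then have ab': "a < b" using ab by auto
    define \<kappa> where "\<kappa> = (y - x) / (b - a)"
    have k1: "\<bar>\<kappa>\<bar> = \<bar>y - x\<bar> / (b - a)" using ab' unfolding \<kappa>_def by (simp add: abs_divide)
    have k: "\<bar>\<kappa>\<bar> \<le> s" unfolding k1 using H ab' by (simp add: pos_divide_le_eq)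
    have sb: "sbp s a b (\<lambda>t. x + \<kappa> * (t - a)) (\<lambda>t. \<kappa>)"
      unfolding sbp_def using k by (auto intro!: derivative_eq_intros)
    have rng: "(\<lambda>t. x + \<kappa> * (t - a)) ` {a..b} \<subseteq> {0..curve_len Q}"
    proof
      fix z assume "z \<in> (\<lambda>t. x + \<kappa> * (t - a)) ` {a..b}"
      then obtain t where t: "t \<in> {a..b}" "z = x + \<kappa> * (t - a)" by auto
      define l where "l = (t - a) / (b - a)"
      have l: "0 \<le> l" "l \<le> 1" using t ab' unfolding l_def by (auto simp: divide_simps)
      have "\<kappa> * (t - a) = l * (y - x)" unfolding l_def \<kappa>_def by simp
      then have z: "z = (1 - l) * x + l * y" using t(2) by (simp add: algebra_simps)
      have "0 \<le> (1 - l) * x + l * y" using H l by (intro add_nonneg_nonneg mult_nonneg_nonneg) auto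
      moreover have "(1 - l) * x + l * y \<le> (1 - l) * curve_len Q + l * curve_len Q"
        using H l by (intro add_mono mult_left_mono) auto
      ultimately show "z \<in> {0..curve_len Q}" using z by (simp add: algebra_simps)
    qed
    have "x + \<kappa> * (b - a) = y" using ab' unfolding \<kappa>_def by simp
    then have "(\<lambda>t. x + \<kappa> * (t - a)) \<in> dog_paths Q s a b x y" unfolding dog_paths_iff using sb rng by auto
    then show ?thesis by auto
  qed
qed

lemma fI_lip_end:
  fixes h :: "real \<Rightarrow> 'a::real_normed_vector"
  assumes ab: "a \<le> b" and s: "0 < s" and pc: "pcw k bb h a b"
    and y1: "y1 \<in> {0..curve_len Q}" "\<bar>y1 - x\<bar> \<le> s * (b - a)"
  shows "fI \<rho> s h Q a b x y1 \<le> fI \<rho> s h Q a b x y2 + ereal (k * \<bar>y1 - y2\<bar> / s)"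
  unfolding fI_def
proof (rule INF_perturb)
  fix \<gamma> \<delta> assume g: "\<gamma> \<in> dog_paths Q s a b x y2" and d: "0 < (\<delta>::real)"
  obtain \<gamma>' where g1: "sbp s a b \<gamma> \<gamma>'" "\<gamma> ` {a..b} \<subseteq> {0..curve_len Q}" "\<gamma> a = x" "\<gamma> b = y2"
    using g unfolding dog_paths_iff by blast
  show "\<exists>y\<in>dog_paths Q s a b x y1. cost \<rho> h Q a b y \<le> cost \<rho> h Q a b \<gamma> + \<delta> + k * \<bar>y1 - y2\<bar> / s"
  proof (cases "y1 = y2")
    case True then show ?thesis using g d by (intro bexI[of _ \<gamma>]) auto
  next
    case False
    define e where "e = (if y2 < y1 then 1 else -1::real)"
    have e: "e = 1 \<or> e = -1" unfolding e_def by auto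
    have dd: "0 < \<bar>y1 - y2\<bar>" using False by auto
    have tgt: "\<gamma> b + e * \<bar>y1 - y2\<bar> = y1" using g1(4) False unfolding e_def by auto
    have nu: "\<gamma> b + e * \<bar>y1 - y2\<bar> \<in> {0..curve_len Q}" using tgt y1 by simp
    have feas: "e * (\<gamma> b + e * \<bar>y1 - y2\<bar> - \<gamma> a) \<le> s * (b - a)"
      using tgt g1(3) y1(2) e by (elim disjE) auto
    obtain \<gamma>2 \<gamma>2' where G: "sbp s a b \<gamma>2 \<gamma>2'" "\<gamma>2 ` {a..b} \<subseteq> {0..curve_len Q}" "\<gamma>2 a = \<gamma> a"
        "\<gamma>2 b = \<gamma> b + e * \<bar>y1 - y2\<bar>"
        "integral {a..b} (\<lambda>t. theta \<rho> (h t) (curve_pt Q (\<gamma>2 t)))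
           \<le> integral {a..b} (\<lambda>t. theta \<rho> (h t) (curve_pt Q (\<gamma> t))) + \<delta> + k * \<bar>y1 - y2\<bar> / s"
      using end_mod[OF ab s g1(1) g1(2) e dd nu feas d pc, where \<rho>=\<rho> and Q=Q] by blast
    have "\<gamma>2 \<in> dog_paths Q s a b x y1" unfolding dog_paths_iff using G g1 tgt by auto
    then show ?thesis using G(5) unfolding cost_def by blast
  qed
qed (rule cost_nonneg)

lemma fI_sym:
  fixes h :: "real \<Rightarrow> 'a::real_normed_vector"
  assumes ab: "a \<le> b" and hw: "\<And>t. t \<in> {a<..<b} \<Longrightarrow> h t = w"
  shows "fI \<rho> s h Q a b x y = fI \<rho> s h Q a b y x"
proof -
  have *: "fI \<rho> s h Q a b x y \<le> fI \<rho> s h Q a b y x" for x y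
    unfolding fI_def
  proof (rule INF_greatest)
    fix \<gamma> assume g: "\<gamma> \<in> dog_paths Q s a b y x"
    obtain \<gamma>' where g1: "sbp s a b \<gamma> \<gamma>'" "\<gamma> ` {a..b} \<subseteq> {0..curve_len Q}" "\<gamma> a = y" "\<gamma> b = x"
      using g unfolding dog_paths_iff by blast
    have s2: "sbp s a b (\<lambda>t. \<gamma> (a + b - t)) (\<lambda>t. - \<gamma>' (a + b - t))" by (rule reflect_sbp[OF g1(1)])
    have r2: "(\<lambda>t. \<gamma> (a + b - t)) ` {a..b} \<subseteq> {0..curve_len Q}"
    proof
      fix z assume "z \<in> (\<lambda>t. \<gamma> (a + b - t)) ` {a..b}"
      then obtain t where t: "t \<in> {a..b}" "z = \<gamma> (a + b - t)" by auto
      have "a + b - t \<in> {a..b}" using t by auto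
      then show "z \<in> {0..curve_len Q}" using g1(2) t by blast
    qed
    have mem: "(\<lambda>t. \<gamma> (a + b - t)) \<in> dog_paths Q s a b x y"
      unfolding dog_paths_iff using s2 r2 g1 by auto
    have "cost \<rho> h Q a b (\<lambda>t. \<gamma> (a + b - t)) = cost \<rho> h Q a b \<gamma>"
      unfolding cost_def by (rule reflect_cost[OF ab hw sbp_cont[OF g1(1)]])
    then show "(INF \<gamma>\<in>dog_paths Q s a b x y. ereal (cost \<rho> h Q a b \<gamma>)) \<le> ereal (cost \<rho> h Q a b \<gamma>)"
      using INF_lower[OF mem, of "\<lambda>\<gamma>. ereal (cost \<rho> h Q a b \<gamma>)"] by simp
  qed
  show ?thesis using *[of x y] *[of y x] by simp
qed

lemma fI_monge:
  fixes h :: "real \<Rightarrow> 'a::real_normed_vector"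
  assumes ab: "a \<le> b" and hw: "\<And>t. t \<in> {a<..<b} \<Longrightarrow> h t = w"
    and m: "\<mu>2 < \<mu>1" and l: "l1 < l2"
  shows "fI \<rho> s h Q a b \<mu>1 l2 + fI \<rho> s h Q a b \<mu>2 l1 \<le> fI \<rho> s h Q a b \<mu>1 l1 + fI \<rho> s h Q a b \<mu>2 l2"
proof (cases "fI \<rho> s h Q a b \<mu>1 l1 = \<infinity> \<or> fI \<rho> s h Q a b \<mu>2 l2 = \<infinity>")
  case True
  have "fI \<rho> s h Q a b \<mu>1 l1 + fI \<rho> s h Q a b \<mu>2 l2 = \<infinity>"
    using True fI_nonneg[of \<rho> s h Q a b \<mu>1 l1] fI_nonneg[of \<rho> s h Q a b \<mu>2 l2]
    by (elim disjE) (simp_all add: ereal_plus_eq_PInfty)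
  then show ?thesis by (metis ereal_less_eq(1))
next
  case False
  obtain r11 where r11: "fI \<rho> s h Q a b \<mu>1 l1 = ereal r11"
    using False fI_nonneg[of \<rho> s h Q a b \<mu>1 l1] by (cases "fI \<rho> s h Q a b \<mu>1 l1") auto
  obtain r22 where r22: "fI \<rho> s h Q a b \<mu>2 l2 = ereal r22"
    using False fI_nonneg[of \<rho> s h Q a b \<mu>2 l2] by (cases "fI \<rho> s h Q a b \<mu>2 l2") auto
  let ?I = "\<lambda>u v (f::real\<Rightarrow>real). integral {u..v} (\<lambda>t. theta \<rho> (h t) (curve_pt Q (f t)))"
  show ?thesis unfolding r11 r22
  proof (rule ereal_le_epsilon2)
    fix e :: real assume e: "0 < e"
    define \<epsilon> where "\<epsilon> = e / 4"
    have eps: "0 < \<epsilon>" using e unfolding \<epsilon>_def by simp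
    obtain \<beta>1 where b1: "\<beta>1 \<in> dog_paths Q s a b \<mu>1 l1" "cost \<rho> h Q a b \<beta>1 < r11 + \<epsilon>"
      using fI_approx[OF r11 eps] by blast
    obtain \<beta>2 where b2: "\<beta>2 \<in> dog_paths Q s a b \<mu>2 l2" "cost \<rho> h Q a b \<beta>2 < r22 + \<epsilon>"
      using fI_approx[OF r22 eps] by blast
    obtain \<beta>1' where B1: "sbp s a b \<beta>1 \<beta>1'" "\<beta>1 ` {a..b} \<subseteq> {0..curve_len Q}" "\<beta>1 a = \<mu>1" "\<beta>1 b = l1"
      using b1(1) unfolding dog_paths_iff by blast
    obtain \<beta>2' where B2: "sbp s a b \<beta>2 \<beta>2'" "\<beta>2 ` {a..b} \<subseteq> {0..curve_len Q}" "\<beta>2 a = \<mu>2" "\<beta>2 b = l2"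
      using b2(1) unfolding dog_paths_iff by blast
    have cD: "continuous_on {a..b} (\<lambda>t. \<beta>1 t - \<beta>2 t)"
      using sbp_cont[OF B1(1)] sbp_cont[OF B2(1)] by (intro continuous_intros)
    obtain m where mm: "a \<le> m" "m \<le> b" "\<beta>1 m - \<beta>2 m = 0"
      using IVT2'[of "\<lambda>t. \<beta>1 t - \<beta>2 t" b 0 a, OF _ _ ab cD] B1 B2 m l by auto
    have eqm: "\<beta>1 m = \<beta>2 m" "\<beta>2 m = \<beta>1 m" using mm(3) by auto
    have sub1: "X ` {u..v} \<subseteq> {0..curve_len Q}" if "X ` {a..b} \<subseteq> {0..curve_len Q}" "a \<le> u" "v \<le> b" for X u v
      using that by auto
    obtain r1 r1' where R1: "sbp s a b r1 r1'" "r1 ` {a..b} \<subseteq> {0..curve_len Q}" "r1 a = \<beta>1 a" "r1 b = \<beta>2 b"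
        "?I a b r1 \<le> ?I a m \<beta>1 + ?I m b \<beta>2 + \<epsilon>"
      using junction[where h=h and w=w and \<rho>=\<rho> and Q=Q, OF mm(1) mm(2) hw sbp_sub[OF B1(1) order_refl mm(2)] sub1[OF B1(2) order_refl mm(2)] sbp_sub[OF B2(1) mm(1) order_refl] sub1[OF B2(2) mm(1) order_refl] eqm(1) eps] by auto
    obtain r2 r2' where R2: "sbp s a b r2 r2'" "r2 ` {a..b} \<subseteq> {0..curve_len Q}" "r2 a = \<beta>2 a" "r2 b = \<beta>1 b"
        "?I a b r2 \<le> ?I a m \<beta>2 + ?I m b \<beta>1 + \<epsilon>"
      using junction[where h=h and w=w and \<rho>=\<rho> and Q=Q, OF mm(1) mm(2) hw sbp_sub[OF B2(1) order_refl mm(2)] sub1[OF B2(2) order_refl mm(2)] sbp_sub[OF B1(1) mm(1) order_refl] sub1[OF B1(2) mm(1) order_refl] eqm(2) eps] by auto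
    have pc: "pcw 1 (\<lambda>j. if j = 0 then a else b) h a b" by (rule pcw1[where w=w]) (use hw ab in auto)
    have sp1: "?I a b \<beta>1 = ?I a m \<beta>1 + ?I m b \<beta>1"
      using Henstock_Kurzweil_Integration.integral_combine[OF mm(1) mm(2) pcw_int[OF pc sbp_cont[OF B1(1)]]] by simp
    have sp2: "?I a b \<beta>2 = ?I a m \<beta>2 + ?I m b \<beta>2"
      using Henstock_Kurzweil_Integration.integral_combine[OF mm(1) mm(2) pcw_int[OF pc sbp_cont[OF B2(1)]]] by simp
    have m1: "r1 \<in> dog_paths Q s a b \<mu>1 l2" unfolding dog_paths_iff using R1 B1 B2 by auto
    have m2: "r2 \<in> dog_paths Q s a b \<mu>2 l1" unfolding dog_paths_iff using R2 B1 B2 by auto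
    have "fI \<rho> s h Q a b \<mu>1 l2 + fI \<rho> s h Q a b \<mu>2 l1 \<le> ereal (cost \<rho> h Q a b r1) + ereal (cost \<rho> h Q a b r2)"
      by (intro add_mono fI_le m1 m2)
    also have "\<dots> = ereal (cost \<rho> h Q a b r1 + cost \<rho> h Q a b r2)" by simp
    also have "\<dots> \<le> ereal (r11 + r22 + e)"
    proof -
      have "cost \<rho> h Q a b r1 + cost \<rho> h Q a b r2 \<le> r11 + r22 + e"
        using R1(5) R2(5) sp1 sp2 b1(2) b2(2) unfolding cost_def \<epsilon>_def by linarith
      then show ?thesis by simp
    qed
    finally show "fI \<rho> s h Q a b \<mu>1 l2 + fI \<rho> s h Q a b \<mu>2 l1 \<le> ereal r11 + ereal r22 + ereal e"
      by simp
  qed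
qed

lemma curve_len_nonneg: "0 \<le> curve_len Q"
  by (induction Q rule: curve_len.induct) auto

lemma curve_len_snoc: "xs \<noteq> [] \<Longrightarrow> curve_len (xs @ [y]) = curve_len xs + dist (last xs) y"
proof (induction xs rule: curve_len.induct)
  case 1 then show ?case by simp
next
  case (2 x) then show ?case by simp
next
  case (3 p q r) then show ?case by simp
qed

lemma vx_0: "P \<noteq> [] \<Longrightarrow> vx P 0 = 0"
  unfolding vx_def by (cases P) auto

lemma vx_step: assumes "Suc j < length P" shows "vx P j \<le> vx P (Suc j)"
proof -
  have "take (Suc (Suc j)) P = take (Suc j) P @ [P ! Suc j]"
    using assms by (simp add: take_Suc_conv_app_nth)
  moreover have "take (Suc j) P \<noteq> []" using assms by (cases P) auto
  ultimately show ?thesis unfolding vx_def by (simp add: curve_len_snoc)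
qed

lemma pcw_F:
  assumes "1 \<le> i" "i < length P" "hiker_on_vertices P h"
  shows "pcw (i - 1) (vx P) h 0 (vx P (i - 1))"
  unfolding pcw_def
proof (intro conjI allI impI)
  show "vx P 0 = 0" using assms by (intro vx_0) auto
  show "vx P (i - 1) = vx P (i - 1)" by simp
  fix j assume j: "j < i - 1"
  show "vx P j \<le> vx P (Suc j)" using j assms by (intro vx_step) auto
  have "1 \<le> Suc j \<and> Suc j < length P" using j assms by auto
  then obtain v where "\<forall>t\<in>{vx P (Suc j - 1)<..<vx P (Suc j)}. h t = v"
    using assms(3) unfolding hiker_on_vertices_def by blast
  then show "\<exists>w. \<forall>t\<in>{vx P j<..<vx P (Suc j)}. h t = w" by auto
qed

lemma greatest_argmin:
  fixes \<Phi> :: "real \<Rightarrow> ereal"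
  assumes L: "0 \<le> L" and nn: "\<And>x. 0 \<le> \<Phi> x"
    and K: "closed {x\<in>{0..L}. \<Phi> x < \<infinity>}"
    and C: "0 \<le> C"
    and lip: "\<And>x y. x \<in> {x\<in>{0..L}. \<Phi> x < \<infinity>} \<Longrightarrow> y \<in> {x\<in>{0..L}. \<Phi> x < \<infinity>} \<Longrightarrow>
               real_of_ereal (\<Phi> x) \<le> real_of_ereal (\<Phi> y) + C * \<bar>x - y\<bar>"
  shows "\<exists>\<mu>. (\<mu> \<in> {0..L} \<and> (\<forall>\<nu>\<in>{0..L}. \<Phi> \<mu> \<le> \<Phi> \<nu>)) \<and>
           (\<forall>y. y \<in> {0..L} \<and> (\<forall>\<nu>\<in>{0..L}. \<Phi> y \<le> \<Phi> \<nu>) \<longrightarrow> y \<le> \<mu>)"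
proof (cases "{x\<in>{0..L}. \<Phi> x < \<infinity>} = {}")
  case True
  then have inf: "\<Phi> x = \<infinity>" if "x \<in> {0..L}" for x using that by auto
  show ?thesis using L inf by (intro exI[of _ L]) auto
next
  case False
  let ?K = "{x\<in>{0..L}. \<Phi> x < \<infinity>}"
  let ?g = "\<lambda>x. real_of_ereal (\<Phi> x)"
  have fin: "\<Phi> x = ereal (?g x)" if "x \<in> ?K" for x
    using that nn[of x] by (cases "\<Phi> x") auto
  have cont: "continuous_on ?K ?g"
  proof (rule lipschitz_on_continuous_on)
    show "C-lipschitz_on ?K ?g"
    proof (rule lipschitz_onI[OF _ C])
      fix x y assume "x \<in> ?K" "y \<in> ?K"
      then show "dist (?g x) (?g y) \<le> C * dist x y"
        using lip[of x y] lip[of y x] by (auto simp: dist_real_def abs_minus_commute)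
    qed
  qed
  have cK: "compact ?K"
  proof -
    have "bounded ?K" by (rule bounded_subset[of "{0..L}"]) auto
    then show ?thesis using K by (simp add: compact_eq_bounded_closed)
  qed
  obtain m where m: "m \<in> ?K" "\<And>x. x \<in> ?K \<Longrightarrow> ?g m \<le> ?g x"
    using continuous_attains_inf[OF cK False cont] by auto
  let ?A = "{x\<in>?K. ?g x = ?g m}"
  have cA: "closed ?A" using continuous_closed_preimage_constant[OF cont compact_imp_closed[OF cK]] by simp
  have bA: "bdd_above ?A" by (rule bdd_aboveI[of _ L]) auto
  have nA: "?A \<noteq> {}" using m by auto
  have SA: "Sup ?A \<in> ?A" by (rule closed_contains_Sup[OF nA bA cA])
  show ?thesis
  proof (intro exI conjI ballI allI impI)
    show "Sup ?A \<in> {0..L}" using SA by auto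
    fix \<nu> assume \<nu>: "\<nu> \<in> {0..L}"
    show "\<Phi> (Sup ?A) \<le> \<Phi> \<nu>"
    proof (cases "\<nu> \<in> ?K")
      case True
      have e1: "\<Phi> (Sup ?A) = ereal (?g m)" using fin[of "Sup ?A"] SA by auto
      have e2: "\<Phi> \<nu> = ereal (?g \<nu>)" by (rule fin[OF True])
      have "?g m \<le> ?g \<nu>" by (rule m(2)[OF True])
      then show ?thesis by (subst e1, subst e2) simp
    next
      case False
      then have "\<Phi> \<nu> = \<infinity>" using \<nu> by auto
      then show ?thesis by simp
    qed
  next
    fix y assume y: "y \<in> {0..L} \<and> (\<forall>\<nu>\<in>{0..L}. \<Phi> y \<le> \<Phi> \<nu>)"
    have "\<Phi> y \<le> \<Phi> m" using y m(1) by auto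
    then have yK: "y \<in> ?K" using m(1) y by auto
    have "?g y \<le> ?g m" using real_of_ereal_positive_mono[OF nn \<open>\<Phi> y \<le> \<Phi> m\<close>] m(1) by auto
    then have "y \<in> ?A" using m(2)[OF yK] yK by auto
    then show "y \<le> Sup ?A" by (rule cSup_upper[OF _ bA])
  qed
qed

lemma ereal_sum_fin: fixes a b :: ereal
  assumes "0 \<le> a" "0 \<le> b" shows "a + b < \<infinity> \<longleftrightarrow> a < \<infinity> \<and> b < \<infinity>"
  using assms by (cases a; cases b) auto

lemma ereal_fin_real: fixes a :: ereal
  assumes "0 \<le> a" "a < \<infinity>" obtains r where "a = ereal r"
  using assms by (cases a) auto

theorem mainTheorem7:
  fixes P Q :: "'a::euclidean_space list" and \<rho> s :: real
    and h :: "real \<Rightarrow> 'a" and i :: nat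
  assumes "Q \<noteq> []"
    and "1 \<le> i" and "i < length P"
    and "hiker_on_vertices P h"
  shows "mono_on {0..curve_len Q} (Psi \<rho> s h P Q i)"
proof -
  define L where "L = curve_len Q"
  define T0 where "T0 = vx P (i - 1)"
  define T1 where "T1 = vx P i"
  define k where "k = i - 1"
  define F where "F \<nu> = fI \<rho> s h Q 0 T0 0 \<nu>" for \<nu>
  define f where "f \<nu> l = fI \<rho> s h Q T0 T1 \<nu> l" for \<nu> l
  define \<Phi> where "\<Phi> l \<nu> = F \<nu> + f \<nu> l" for l \<nu>
  have L0: "0 \<le> L" unfolding L_def by (rule curve_len_nonneg)
  have pcF: "pcw k (vx P) h 0 T0" unfolding k_def T0_def using assms(2-4) by (rule pcw_F)
  have T00: "0 \<le> T0" using pcw_le[OF pcF] .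
  have T01: "T0 \<le> T1" unfolding T0_def T1_def using vx_step[of "i - 1" P] assms(2,3) by auto
  obtain w where hw: "\<And>t. t \<in> {T0<..<T1} \<Longrightarrow> h t = w"
  proof -
    have "1 \<le> i \<and> i < length P" using assms by auto
    then obtain v where "\<forall>t\<in>{vx P (i - 1)<..<vx P i}. h t = v"
      using assms(4) unfolding hiker_on_vertices_def by blast
    then show ?thesis using that unfolding T0_def T1_def by blast
  qed
  have pc1: "pcw 1 (\<lambda>j. if j = 0 then T0 else T1) h T0 T1" by (rule pcw1[where w=w]) (use hw T01 in auto)
  have Psi_eq: "Psi \<rho> s h P Q i l = (GREATEST \<mu>. \<mu> \<in> {0..L} \<and> (\<forall>\<nu>\<in>{0..L}. \<Phi> l \<mu> \<le> \<Phi> l \<nu>))" for l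
    unfolding Psi_def \<Phi>_def F_def f_def F_fI f_fI T0_def T1_def L_def by simp
  have Fnn: "0 \<le> F x" for x unfolding F_def by (rule fI_nonneg)
  have fnn: "0 \<le> f x l" for x l unfolding f_def by (rule fI_nonneg)
  have Ffin: "F \<nu> < \<infinity> \<longleftrightarrow> 0 \<le> s \<and> \<nu> \<in> {0..L} \<and> \<bar>\<nu>\<bar> \<le> s * T0" for \<nu>
    unfolding F_def fI_finite_iff paths_nonempty_iff[OF T00] L_def[symmetric] using L0 by auto
  have ffin: "f \<nu> l < \<infinity> \<longleftrightarrow> 0 \<le> s \<and> \<nu> \<in> {0..L} \<and> l \<in> {0..L} \<and> \<bar>l - \<nu>\<bar> \<le> s * (T1 - T0)" for \<nu> l
    unfolding f_def fI_finite_iff paths_nonempty_iff[OF T01] L_def[symmetric] by auto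
  have Kdef: "{x\<in>{0..L}. \<Phi> l x < \<infinity>} = {x\<in>{0..L}. 0 \<le> s \<and> \<bar>x\<bar> \<le> s * T0 \<and> l \<in> {0..L} \<and> \<bar>l - x\<bar> \<le> s * (T1 - T0)}" for l
    unfolding \<Phi>_def using ereal_sum_fin[OF Fnn fnn] Ffin ffin by auto
  have Kclosed: "closed {x\<in>{0..L}. \<Phi> l x < \<infinity>}" for l
  proof (cases "0 \<le> s \<and> l \<in> {0..L}")
    case True
    have eq: "{x\<in>{0..L}. \<Phi> l x < \<infinity>} = {0..L} \<inter> {x. \<bar>x\<bar> \<le> s * T0} \<inter> {x. \<bar>l - x\<bar> \<le> s * (T1 - T0)}"
      unfolding Kdef using True by blast
    have c1: "closed {x::real. \<bar>x\<bar> \<le> s * T0}"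
      by (intro closed_Collect_le continuous_intros)
    have c2: "closed {x::real. \<bar>l - x\<bar> \<le> s * (T1 - T0)}"
      by (intro closed_Collect_le continuous_intros)
    have "closed ({0..L} \<inter> {x. \<bar>x\<bar> \<le> s * T0} \<inter> {x. \<bar>l - x\<bar> \<le> s * (T1 - T0)})"
      by (intro closed_Int closed_atLeastAtMost c1 c2)
    then show ?thesis unfolding eq .
  next
    case False
    then have e: "{x\<in>{0..L}. \<Phi> l x < \<infinity>} = {}" unfolding Kdef by blast
    show ?thesis unfolding e by simp
  qed
  define C where "C = (if 0 < s then (real k + 1) / s else 0)"
  have C0: "0 \<le> C" unfolding C_def by auto
  have Lip: "real_of_ereal (\<Phi> l x) \<le> real_of_ereal (\<Phi> l y) + C * \<bar>x - y\<bar>"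
    if x: "x \<in> {x\<in>{0..L}. \<Phi> l x < \<infinity>}" and y: "y \<in> {x\<in>{0..L}. \<Phi> l x < \<infinity>}" for l x y
  proof (cases "0 < s")
    case False
    then have "x = y" using x y unfolding Kdef by auto
    then show ?thesis by simp
  next
    case True
    have xK: "x \<in> {0..L}" "\<bar>x\<bar> \<le> s * T0" "l \<in> {0..L}" "\<bar>l - x\<bar> \<le> s * (T1 - T0)" using x unfolding Kdef by auto
    have yK: "y \<in> {0..L}" "\<bar>y\<bar> \<le> s * T0" "l \<in> {0..L}" "\<bar>l - y\<bar> \<le> s * (T1 - T0)" using y unfolding Kdef by auto
    have F1: "F x \<le> F y + ereal (k * \<bar>x - y\<bar> / s)"
      unfolding F_def by (rule fI_lip_end[OF T00 True pcF]) (use xK L_def in auto)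
    have f1: "f x l \<le> f y l + ereal (real 1 * \<bar>x - y\<bar> / s)"
    proof -
      have "f x l = fI \<rho> s h Q T0 T1 l x" unfolding f_def by (rule fI_sym[OF T01 hw])
      also have "\<dots> \<le> fI \<rho> s h Q T0 T1 l y + ereal (real 1 * \<bar>x - y\<bar> / s)"
        by (rule fI_lip_end[OF T01 True pc1]) (use xK L_def in \<open>auto simp: abs_minus_commute\<close>)
      also have "fI \<rho> s h Q T0 T1 l y = f y l" unfolding f_def by (rule fI_sym[OF T01 hw, symmetric])
      finally show ?thesis .
    qed
    have Fx: "F x < \<infinity>" "f x l < \<infinity>" "F y < \<infinity>" "f y l < \<infinity>"
      using x y ereal_sum_fin[OF Fnn fnn] unfolding \<Phi>_def by auto
    obtain a1 where a1: "F x = ereal a1" using Fnn Fx(1) by (rule ereal_fin_real)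
    obtain b1 where b1: "f x l = ereal b1" using fnn Fx(2) by (rule ereal_fin_real)
    obtain a2 where a2: "F y = ereal a2" using Fnn Fx(3) by (rule ereal_fin_real)
    obtain b2 where b2: "f y l = ereal b2" using fnn Fx(4) by (rule ereal_fin_real)
    have "a1 \<le> a2 + k * \<bar>x - y\<bar> / s" using F1 a1 a2 by simp
    moreover have "b1 \<le> b2 + \<bar>x - y\<bar> / s" using f1 b1 b2 by simp
    moreover have "(real k + 1) / s * \<bar>x - y\<bar> = real k * \<bar>x - y\<bar> / s + \<bar>x - y\<bar> / s"
      by (simp add: add_divide_distrib distrib_right)
    ultimately have "a1 + b1 \<le> a2 + b2 + (real k + 1) / s * \<bar>x - y\<bar>"
      by linarith
    then show ?thesis unfolding \<Phi>_def a1 a2 b1 b2 C_def using True by simp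
  qed
  have G: "Psi \<rho> s h P Q i l \<in> {0..L} \<and> (\<forall>\<nu>\<in>{0..L}. \<Phi> l (Psi \<rho> s h P Q i l) \<le> \<Phi> l \<nu>)
      \<and> (\<forall>y. y \<in> {0..L} \<and> (\<forall>\<nu>\<in>{0..L}. \<Phi> l y \<le> \<Phi> l \<nu>) \<longrightarrow> y \<le> Psi \<rho> s h P Q i l)" for l
  proof -
    have nnl: "0 \<le> \<Phi> l x" for x unfolding \<Phi>_def using Fnn fnn by (simp add: add_nonneg_nonneg)
    obtain \<mu> where mu: "\<mu> \<in> {0..L} \<and> (\<forall>\<nu>\<in>{0..L}. \<Phi> l \<mu> \<le> \<Phi> l \<nu>)"
        "\<forall>y. y \<in> {0..L} \<and> (\<forall>\<nu>\<in>{0..L}. \<Phi> l y \<le> \<Phi> l \<nu>) \<longrightarrow> y \<le> \<mu>"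
      using greatest_argmin[OF L0 nnl Kclosed C0 Lip] by blast
    have "Psi \<rho> s h P Q i l = \<mu>" unfolding Psi_eq by (rule Greatest_equality) (use mu in auto)
    then show ?thesis using mu by simp
  qed
  show ?thesis
  proof (rule mono_onI)
    fix l1 l2 assume l1: "l1 \<in> {0..curve_len Q}" and l2: "l2 \<in> {0..curve_len Q}" and le: "l1 \<le> l2"
    let ?m1 = "Psi \<rho> s h P Q i l1"
    let ?m2 = "Psi \<rho> s h P Q i l2"
    show "?m1 \<le> ?m2"
    proof (rule ccontr)
      assume "\<not> ?m1 \<le> ?m2"
      then have lt: "?m2 < ?m1" by simp
      have G1: "?m1 \<in> {0..L}" "\<And>\<nu>. \<nu> \<in> {0..L} \<Longrightarrow> \<Phi> l1 ?m1 \<le> \<Phi> l1 \<nu>"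
        "\<And>y. y \<in> {0..L} \<Longrightarrow> (\<forall>\<nu>\<in>{0..L}. \<Phi> l1 y \<le> \<Phi> l1 \<nu>) \<Longrightarrow> y \<le> ?m1"
        using G[of l1] by auto
      have G2: "?m2 \<in> {0..L}" "\<And>\<nu>. \<nu> \<in> {0..L} \<Longrightarrow> \<Phi> l2 ?m2 \<le> \<Phi> l2 \<nu>"
        "\<And>y. y \<in> {0..L} \<Longrightarrow> (\<forall>\<nu>\<in>{0..L}. \<Phi> l2 y \<le> \<Phi> l2 \<nu>) \<Longrightarrow> y \<le> ?m2"
        using G[of l2] by auto
      have l12: "l1 < l2" using le lt by (cases "l1 = l2") auto
      have l1L: "l1 \<in> {0..L}" "l2 \<in> {0..L}" using l1 l2 unfolding L_def by auto
      show False
      proof (cases "{x\<in>{0..L}. \<Phi> l1 x < \<infinity>} = {}")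
        case True
        have K2: "{x\<in>{0..L}. \<Phi> l2 x < \<infinity>} = {}"
        proof (rule ccontr)
          assume "{x\<in>{0..L}. \<Phi> l2 x < \<infinity>} \<noteq> {}"
          then obtain x where "x \<in> {x\<in>{0..L}. \<Phi> l2 x < \<infinity>}" by blast
          then have x: "x \<in> {0..L}" "0 \<le> s" "\<bar>x\<bar> \<le> s * T0" "\<bar>l2 - x\<bar> \<le> s * (T1 - T0)"
            unfolding Kdef by auto
          have "min x l1 \<in> {x\<in>{0..L}. \<Phi> l1 x < \<infinity>}"
          proof -
            have "\<bar>l1 - min x l1\<bar> \<le> s * (T1 - T0)"
            proof (cases "x \<le> l1")
              case True then show ?thesis using x le by (auto simp: min_def)
            next
              case False
              have "0 \<le> s * (T1 - T0)" using x(2) T01 by simp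
              then show ?thesis using False by (auto simp: min_def)
            qed
            moreover have "\<bar>min x l1\<bar> \<le> s * T0" using x l1L by (auto simp: min_def)
            ultimately show ?thesis unfolding Kdef using x l1L by (auto simp: min_def)
          qed
          then show False using True by blast
        qed
        have "?m1 = L"
        proof -
          have "L \<le> ?m1"
          proof (rule G1(3))
            show "L \<in> {0..L}" using L0 by auto
            show "\<forall>\<nu>\<in>{0..L}. \<Phi> l1 L \<le> \<Phi> l1 \<nu>"
            proof
              fix \<nu> assume "\<nu> \<in> {0..L}"
              then have "\<Phi> l1 \<nu> = \<infinity>" using True by auto
              then show "\<Phi> l1 L \<le> \<Phi> l1 \<nu>" by simp
            qed
          qed
          then show ?thesis using G1(1) by auto
        qed
        moreover have "?m2 = L"
        proof -
          have "L \<le> ?m2"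
          proof (rule G2(3))
            show "L \<in> {0..L}" using L0 by auto
            show "\<forall>\<nu>\<in>{0..L}. \<Phi> l2 L \<le> \<Phi> l2 \<nu>"
            proof
              fix \<nu> assume "\<nu> \<in> {0..L}"
              then have "\<Phi> l2 \<nu> = \<infinity>" using K2 by auto
              then show "\<Phi> l2 L \<le> \<Phi> l2 \<nu>" by simp
            qed
          qed
          then show ?thesis using G2(1) by auto
        qed
        ultimately show False using lt by simp
      next
        case False
        then obtain x1 where x1: "x1 \<in> {0..L}" "\<Phi> l1 x1 < \<infinity>" by blast
        have fin1: "\<Phi> l1 ?m1 < \<infinity>" using G1(2)[OF x1(1)] x1(2) by auto
        have "\<not> (\<forall>\<nu>\<in>{0..L}. \<Phi> l2 ?m1 \<le> \<Phi> l2 \<nu>)"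
          using G2(3)[OF G1(1)] lt by force
        then obtain \<nu> where nu: "\<nu> \<in> {0..L}" "\<Phi> l2 \<nu> < \<Phi> l2 ?m1" by (auto simp: not_le)
        have strict: "\<Phi> l2 ?m2 < \<Phi> l2 ?m1" using G2(2)[OF nu(1)] nu(2) by auto
        have fin2: "\<Phi> l2 ?m2 < \<infinity>" using strict by (auto simp: less_top[symmetric] top_ereal_def)
        have weak: "\<Phi> l1 ?m1 \<le> \<Phi> l1 ?m2" using G1(2)[OF G2(1)] .
        have monge: "f ?m1 l2 + f ?m2 l1 \<le> f ?m1 l1 + f ?m2 l2"
          unfolding f_def by (rule fI_monge[OF T01 hw lt l12])
        have e1: "F ?m1 < \<infinity>" "f ?m1 l1 < \<infinity>" using fin1 ereal_sum_fin[OF Fnn fnn] unfolding \<Phi>_def by auto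
        have e2: "F ?m2 < \<infinity>" "f ?m2 l2 < \<infinity>" using fin2 ereal_sum_fin[OF Fnn fnn] unfolding \<Phi>_def by auto
        obtain a1 where a1: "F ?m1 = ereal a1" using Fnn e1(1) by (rule ereal_fin_real)
        obtain a2 where a2: "F ?m2 = ereal a2" using Fnn e2(1) by (rule ereal_fin_real)
        obtain f11 where f11: "f ?m1 l1 = ereal f11" using fnn e1(2) by (rule ereal_fin_real)
        obtain f22 where f22: "f ?m2 l2 = ereal f22" using fnn e2(2) by (rule ereal_fin_real)
        have "f ?m1 l2 + f ?m2 l1 \<le> ereal (f11 + f22)" using monge f11 f22 by simp
        then have "f ?m1 l2 + f ?m2 l1 < \<infinity>" by (rule le_less_trans) simp
        then have e3: "f ?m1 l2 < \<infinity>" "f ?m2 l1 < \<infinity>" using ereal_sum_fin[OF fnn fnn] by auto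
        obtain f12 where f12: "f ?m1 l2 = ereal f12" using fnn e3(1) by (rule ereal_fin_real)
        obtain f21 where f21: "f ?m2 l1 = ereal f21" using fnn e3(2) by (rule ereal_fin_real)
        have r1: "a1 + f11 \<le> a2 + f21" using weak unfolding \<Phi>_def a1 a2 f11 f21 by simp
        have r2: "a2 + f22 < a1 + f12" using strict unfolding \<Phi>_def a1 a2 f22 f12 by simp
        have r3: "f12 + f21 \<le> f11 + f22" using monge unfolding f11 f22 f12 f21 by simp
        show False using r1 r2 r3 by linarith
      qed
    qed
  qed
qed

end
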